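(* For all $h\ge1$ and $i_1,\dots,i_h,j_1,\dots,j_h\in\{1,\dots,n\}$, $\mathcal K\big([i_1,\dots,i_h|j_1,\dots,j_h]\big)=(-1)^{\binom h2}(i_1|j_1)(i_2|j_2)\cdots(i_h|j_h)\in\mathbb{C}[M_{n,n}]$.
   Context: $\mathbb{C}[M_{n,n}]$ is the polynomial algebra in commuting indeterminates $(i|j)$, $1\le i,j\le n$. $D^l_{ij}$ is the derivation of $\mathbb{C}[M_{n,n}]$ with $D^l_{ij}((h|k))=\delta_{jh}(i|k)$. Let $\rho_{ij}(\mathbf p)=D^l_{ij}(\mathbf p)+(i|j)\mathbf p$; the map $e_{ij}\mapsto\rho_{ij}$ extends to an algebra morphism $\tau:\mathbf{U}(gl(n))\to\mathrm{End}_{\mathbb C}(\mathbb{C}[M_{n,n}])$. The Koszul map is the linear map $\mathcal K:\mathbf{U}(gl(n))\to\mathbb{C}[M_{n,n}]$, $\mathcal K(\mathbf P)=\tau(\mathbf P)(1)$. Virtual variables: $A_0=\{\alpha_1,\dots,\alpha_{m_0}\}$ (parity $0$), $A_1=\{\beta_1,\dots,\beta_{m_1}\}$ (parity $1$), $L=\{1,\dots,n\}$ (parity $1$), $m_0,m_1$ large; $gl(m_0|m_1+n)$ has homogeneous basis $e_{a,b}$ of parity $|a|+|b|$ and superbracket $[e_{a,b},e_{c,d}]=\delta_{bc}e_{a,d}-(-1)^{(|a|+|b|)(|c|+|d|)}\delta_{ad}e_{c,b}$, with $\mathbf{U}(gl(n))\subset\mathbf{U}(gl(m_0|m_1+n))$.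 A product $e_{a_m,b_m}\cdots e_{a_1,b_1}$ is irregular if for some $i\le m$ and virtual $\gamma$, $\#\{j\le i:b_j=\gamma\}>\#\{j<i:a_j=\gamma\}$; $\mathbf{Irr}$ is the left ideal they generate; it is known $Virt=\mathbf{U}(gl(n))\oplus\mathbf{Irr}$ is a subalgebra with $\mathbf{Irr}$ a two-sided ideal, and $\mathfrak p$ is the projection $Virt\to\mathbf{U}(gl(n))$ with kernel $\mathbf{Irr}$. The column Capelli bitableau is $[i_1,\dots,i_h|j_1,\dots,j_h]=\mathfrak p(e_{i_1\alpha_1}\cdots e_{i_h\alpha_h}e_{\alpha_1j_1}\cdots e_{\alpha_hj_h})$ with distinct positive virtual $\alpha_1,\dots,\alpha_h$. *)

theory Defs
  imports Complex_Main "HOL-Library.Poly_Mapping"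
begin

text \<open>Polynomials in commuting indeterminates (i|j): monomials are finitely supported
  exponent maps on index pairs; polynomials are finitely supported coefficient maps.\<close>
type_synonym cpoly = "((nat \<times> nat) \<Rightarrow>\<^sub>0 nat) \<Rightarrow>\<^sub>0 complex"

definition var :: "nat \<Rightarrow> nat \<Rightarrow> cpoly" where
  "var i j = Poly_Mapping.single (Poly_Mapping.single (i, j) 1) 1"

definition const :: "complex \<Rightarrow> cpoly" where
  "const c = Poly_Mapping.single 0 c"

text \<open>The derivation D^l_{ij}, D^l_{ij}((h|k)) = delta_{jh} (i|k), extended as a derivation:
  on a monomial m it gives sum_k m(j,k) * (m / (j|k)) * (i|k).\<close>
definition Dl :: "nat \<Rightarrow> nat \<Rightarrow> nat \<Rightarrow> cpoly \<Rightarrow> cpoly" where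
  "Dl n i j p = (\<Sum>(m::(nat \<times> nat) \<Rightarrow>\<^sub>0 nat)\<in>Poly_Mapping.keys p. \<Sum>k\<in>{1..n}.
      Poly_Mapping.single (m - Poly_Mapping.single (j, k) 1 + Poly_Mapping.single (i, k) 1)
        (Poly_Mapping.lookup p m * of_nat (Poly_Mapping.lookup m (j, k))))"

definition rho :: "nat \<Rightarrow> nat \<Rightarrow> nat \<Rightarrow> cpoly \<Rightarrow> cpoly" where
  "rho n i j p = Dl n i j p + var i j * p"

text \<open>Alpha k: positive virtual symbols (parity 0); Beta k: negative virtual symbols (parity 1);
  Prop i: proper symbols (parity 1), meaningful for 1 \<le> i \<le> n.  The virtual alphabets are
  taken countably infinite (the limit of "m_0, m_1 large").\<close>
datatype sym = Alpha nat | Beta nat | Prop nat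

fun par :: "sym \<Rightarrow> nat" where
  "par (Alpha _) = 0" | "par (Beta _) = 1" | "par (Prop _) = 1"

fun virtual :: "sym \<Rightarrow> bool" where
  "virtual (Prop _) = False" | "virtual _ = True"

fun valid_sym :: "nat \<Rightarrow> sym \<Rightarrow> bool" where
  "valid_sym n (Prop i) = (1 \<le> i \<and> i \<le> n)" | "valid_sym n _ = True"

fun pidx :: "sym \<Rightarrow> nat" where
  "pidx (Prop i) = i" | "pidx _ = 0"

type_synonym letter = "sym \<times> sym"   \<comment> \<open>(a,b) stands for e_{a,b}\<close>

text \<open>Free associative algebra on the letters: a word [l_1,...,l_k] stands for the
  product e_{l_1} ... e_{l_k} (written left to right).\<close>
type_synonym fa = "letter list \<Rightarrow>\<^sub>0 complex"

definition fmul :: "fa \<Rightarrow> fa \<Rightarrow> fa" where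
  "fmul x y = (\<Sum>u\<in>Poly_Mapping.keys x. \<Sum>v\<in>Poly_Mapping.keys y. Poly_Mapping.single (u @ v) (Poly_Mapping.lookup x u * Poly_Mapping.lookup y v))"

definition fscal :: "complex \<Rightarrow> fa" where
  "fscal c = Poly_Mapping.single [] c"

definition e :: "sym \<Rightarrow> sym \<Rightarrow> fa" where
  "e a b = Poly_Mapping.single [(a, b)] 1"

definition valid_word :: "nat \<Rightarrow> letter list \<Rightarrow> bool" where
  "valid_word n w = (\<forall>l\<in>set w. valid_sym n (fst l) \<and> valid_sym n (snd l))"

definition valid_el :: "nat \<Rightarrow> fa \<Rightarrow> bool" where
  "valid_el n x = (\<forall>w\<in>Poly_Mapping.keys x. valid_word n w)"

definition sgn :: "sym \<Rightarrow> sym \<Rightarrow> sym \<Rightarrow> sym \<Rightarrow> complex" where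
  "sgn a b c d = (-1) ^ ((par a + par b) * (par c + par d))"

text \<open>Defining relation of U(gl(m_0|m_1+n)):
  e_{ab} e_{cd} - sgn e_{cd} e_{ab} = delta_{bc} e_{ad} - sgn delta_{ad} e_{cb}.\<close>
definition rel :: "sym \<Rightarrow> sym \<Rightarrow> sym \<Rightarrow> sym \<Rightarrow> fa" where
  "rel a b c d =
     fmul (e a b) (e c d) - fmul (fscal (sgn a b c d)) (fmul (e c d) (e a b))
     - ((if b = c then e a d else 0) - fmul (fscal (sgn a b c d)) (if a = d then e c b else 0))"

text \<open>Two-sided ideal of the free algebra (on valid letters) generated by the relations;
  the quotient is U(gl(m_0|m_1+n)).\<close>
inductive_set Jid :: "nat \<Rightarrow> fa set" for n where
  gen: "valid_sym n a \<Longrightarrow> valid_sym n b \<Longrightarrow> valid_sym n c \<Longrightarrow> valid_sym n d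
        \<Longrightarrow> rel a b c d \<in> Jid n"
| zero: "0 \<in> Jid n"
| add: "x \<in> Jid n \<Longrightarrow> y \<in> Jid n \<Longrightarrow> x + y \<in> Jid n"
| mult: "x \<in> Jid n \<Longrightarrow> valid_el n u \<Longrightarrow> valid_el n v \<Longrightarrow> fmul u (fmul x v) \<in> Jid n"

text \<open>For a word w = [l_m, ..., l_1] (product e_{a_m b_m} ... e_{a_1 b_1}),
  r = rev w lists the letters as l_1, ..., l_m (0-based).\<close>
definition irregular :: "letter list \<Rightarrow> bool" where
  "irregular w = (let r = rev w in
     \<exists>i < length r. \<exists>\<gamma>. virtual \<gamma> \<and>
       length (filter (\<lambda>l. snd l = \<gamma>) (take (Suc i) r))
         > length (filter (\<lambda>l. fst l = \<gamma>) (take i r)))"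

text \<open>Preimage in the free algebra of the left ideal Irr of U(gl(m_0|m_1+n)) generated by
  the irregular monomials.\<close>
inductive_set Irr :: "nat \<Rightarrow> fa set" for n where
  rels: "x \<in> Jid n \<Longrightarrow> x \<in> Irr n"
| gen: "valid_word n w \<Longrightarrow> irregular w \<Longrightarrow> valid_el n u
        \<Longrightarrow> fmul u (Poly_Mapping.single w 1) \<in> Irr n"
| zero: "0 \<in> Irr n"
| add: "x \<in> Irr n \<Longrightarrow> y \<in> Irr n \<Longrightarrow> x + y \<in> Irr n"

text \<open>Elements of the free algebra on proper letters e_{ij}, 1 \<le> i,j \<le> n: representatives of
  elements of U(gl(n)).\<close>
definition proper_word :: "nat \<Rightarrow> letter list \<Rightarrow> bool" where
  "proper_word n w = (\<forall>l\<in>set w. \<exists>i j. l = (Prop i, Prop j) \<and> i \<in> {1..n} \<and> j \<in> {1..n})"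

definition proper :: "nat \<Rightarrow> fa \<Rightarrow> bool" where
  "proper n x = (\<forall>w\<in>Poly_Mapping.keys x. proper_word n w)"

text \<open>The projection p : Virt -> U(gl(n)) with kernel Irr (a representative of the U(gl(n))
  component).\<close>
definition proj :: "nat \<Rightarrow> fa \<Rightarrow> fa" where
  "proj n x = (SOME u. proper n u \<and> x - u \<in> Irr n)"

text \<open>tau on representatives: a word e_{l_1} ... e_{l_k} acts as rho_{l_1} o ... o rho_{l_k}.\<close>
definition rho_word :: "nat \<Rightarrow> letter list \<Rightarrow> cpoly \<Rightarrow> cpoly" where
  "rho_word n w p = foldr (\<lambda>l q. rho n (pidx (fst l)) (pidx (snd l)) q) w p"

text \<open>Koszul map K(P) = tau(P)(1).\<close>
definition koszul :: "nat \<Rightarrow> fa \<Rightarrow> cpoly" where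
  "koszul n x = (\<Sum>w\<in>Poly_Mapping.keys x. const (Poly_Mapping.lookup x w) * rho_word n w 1)"

definition capelli_word :: "nat \<Rightarrow> (nat \<Rightarrow> nat) \<Rightarrow> (nat \<Rightarrow> nat) \<Rightarrow> (nat \<Rightarrow> nat) \<Rightarrow> letter list" where
  "capelli_word h i j \<alpha> =
     map (\<lambda>t. (Prop (i t), Alpha (\<alpha> t))) [1..<h+1] @ map (\<lambda>t. (Alpha (\<alpha> t), Prop (j t))) [1..<h+1]"

definition capelli :: "nat \<Rightarrow> nat \<Rightarrow> (nat \<Rightarrow> nat) \<Rightarrow> (nat \<Rightarrow> nat) \<Rightarrow> (nat \<Rightarrow> nat) \<Rightarrow> fa" where
  "capelli n h i j \<alpha> = proj n (Poly_Mapping.single (capelli_word h i j \<alpha>) 1)"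

end

theory Submission
  imports Defs "HOL-Library.Nat_Bijection"
begin

definition sc :: "complex \<Rightarrow> ('a \<Rightarrow>\<^sub>0 complex) \<Rightarrow> ('a \<Rightarrow>\<^sub>0 complex)" where
  "sc c p = Poly_Mapping.map ((*) c) p"

lemma lookup_sc [simp]: "Poly_Mapping.lookup (sc c p) k = c * Poly_Mapping.lookup p k"
  unfolding sc_def by transfer (simp add: when_def)

lemma sc_add: "sc c (p + q) = sc c p + sc c q"
  by (rule poly_mapping_eqI) (simp add: lookup_add algebra_simps)
lemma sc_diff: "sc c (p - q) = sc c p - sc c q"
  by (rule poly_mapping_eqI) (simp add: lookup_minus algebra_simps)
lemma sc_uminus: "sc c (- p) = - sc c p"
  by (rule poly_mapping_eqI) simp
lemma sc_zero [simp]: "sc c 0 = 0"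
  by (rule poly_mapping_eqI) simp
lemma sc_0 [simp]: "sc 0 p = 0"
  by (rule poly_mapping_eqI) simp
lemma sc_1 [simp]: "sc 1 p = p"
  by (rule poly_mapping_eqI) simp
lemma sc_m1: "sc (-1) p = - p"
  by (rule poly_mapping_eqI) simp
lemma sc_sc [simp]: "sc c (sc d p) = sc (c*d) p"
  by (rule poly_mapping_eqI) simp
lemma sc_plus: "sc (c + d) p = sc c p + sc d p"
  by (rule poly_mapping_eqI) (simp add: lookup_add algebra_simps)
lemma sc_single [simp]: "sc c (Poly_Mapping.single k a) = Poly_Mapping.single k (c*a)"
  by (rule poly_mapping_eqI) (simp add: lookup_single when_def)
lemma sc_sum: "sc c (sum f A) = sum (\<lambda>x. sc c (f x)) A"
  by (induction A rule: infinite_finite_induct) (auto simp: sc_add)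

definition lin :: "('a \<Rightarrow> 'b \<Rightarrow>\<^sub>0 complex) \<Rightarrow> ('a \<Rightarrow>\<^sub>0 complex) \<Rightarrow> 'b \<Rightarrow>\<^sub>0 complex" where
  "lin F p = (\<Sum>m\<in>Poly_Mapping.keys p. sc (Poly_Mapping.lookup p m) (F m))"

lemma lin_superset:
  assumes "finite A" "Poly_Mapping.keys p \<subseteq> A"
  shows "lin F p = (\<Sum>m\<in>A. sc (Poly_Mapping.lookup p m) (F m))"
  unfolding lin_def
  by (rule sum.mono_neutral_left) (use assms in \<open>auto simp: in_keys_iff\<close>)

lemma lin_add: "lin F (p + q) = lin F p + lin F q"
proof -
  let ?A = "Poly_Mapping.keys p \<union> Poly_Mapping.keys q"
  have k: "Poly_Mapping.keys (p+q) \<subseteq> ?A" by (rule keys_add)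
  show ?thesis
    by (simp add: lin_superset[OF _ k] lin_superset[of ?A p] lin_superset[of ?A q]
        lookup_add sc_plus sum.distrib)
qed

lemma lin_zero [simp]: "lin F 0 = 0"
  by (simp add: lin_def)

lemma lin_sc: "lin F (sc c p) = sc c (lin F p)"
proof -
  have k: "Poly_Mapping.keys (sc c p) \<subseteq> Poly_Mapping.keys p" by (auto simp: in_keys_iff)
  have "lin F (sc c p) = (\<Sum>m\<in>Poly_Mapping.keys p. sc (Poly_Mapping.lookup (sc c p) m) (F m))"
    by (rule lin_superset) (use k in auto)
  then show ?thesis by (simp add: lin_def sc_sum)
qed

lemma lin_single [simp]: "lin F (Poly_Mapping.single m c) = sc c (F m)"
  by (simp add: lin_def)

lemma lin_uminus: "lin F (- p) = - lin F p"
  using lin_sc[of F "-1" p] by (simp add: sc_m1)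

lemma lin_diff: "lin F (p - q) = lin F p - lin F q"
  using lin_add[of F p "-q"] by (simp add: lin_uminus)

lemma lin_sum: "lin F (sum f A) = sum (\<lambda>x. lin F (f x)) A"
  by (induction A rule: infinite_finite_induct) (auto simp: lin_add)

lemma lin_cong: "(\<And>m. m \<in> Poly_Mapping.keys p \<Longrightarrow> F m = G m) \<Longrightarrow> lin F p = lin G p"
  by (simp add: lin_def)

definition islin :: "(('a \<Rightarrow>\<^sub>0 complex) \<Rightarrow> ('b \<Rightarrow>\<^sub>0 complex)) \<Rightarrow> bool" where
  "islin f \<longleftrightarrow> (\<forall>p q. f (p + q) = f p + f q) \<and> (\<forall>c p. f (sc c p) = sc c (f p))"

lemma islin_lin [simp]: "islin (lin F)"
  by (simp add: islin_def lin_add lin_sc)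

lemma islinD:
  assumes "islin f"
  shows "f (p + q) = f p + f q" "f (sc c p) = sc c (f p)"
  using assms by (auto simp: islin_def)

lemma islin_zero: "islin f \<Longrightarrow> f 0 = 0"
  using islinD(2)[of f 0 0] by simp

lemma islin_uminus: "islin f \<Longrightarrow> f (- p) = - f p"
  using islinD(2)[of f "-1" p] by (simp add: sc_m1)

lemma islin_diff: "islin f \<Longrightarrow> f (p - q) = f p - f q"
  using islinD(1)[of f p "-q"] islin_uminus[of f q] by simp

lemma islin_sum: "islin f \<Longrightarrow> f (sum g A) = sum (\<lambda>x. f (g x)) A"
  by (induction A rule: infinite_finite_induct) (auto simp: islinD islin_zero)

lemma islin_lin_comm: "islin f \<Longrightarrow> f (lin G p) = lin (\<lambda>m. f (G m)) p"
  by (simp add: lin_def islin_sum islinD)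

lemma islin_comp: "islin f \<Longrightarrow> islin g \<Longrightarrow> islin (\<lambda>p. f (g p))"
  by (simp add: islin_def)

lemma islin_add: "islin f \<Longrightarrow> islin g \<Longrightarrow> islin (\<lambda>p. f p + g p)"
  by (simp add: islin_def sc_add)

lemma islin_sumf: "(\<And>k. k \<in> A \<Longrightarrow> islin (f k)) \<Longrightarrow> islin (\<lambda>p. \<Sum>k\<in>A. f k p)"
  by (induction A rule: infinite_finite_induct)
     (auto simp: islin_def sc_add sc_sum sum.distrib)

lemma islin_0: "islin (\<lambda>p. 0)" by (simp add: islin_def)
lemma islin_id: "islin (\<lambda>p. p)" by (simp add: islin_def)

lemma lin_id: "lin (\<lambda>m. Poly_Mapping.single m 1) p = p"
proof (rule poly_mapping_eqI)
  fix k
  have "Poly_Mapping.lookup (lin (\<lambda>m. Poly_Mapping.single m 1) p) k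
      = (\<Sum>m\<in>Poly_Mapping.keys p. if m = k then Poly_Mapping.lookup p m else 0)"
    by (simp add: lin_def lookup_sum lookup_single when_def)
  also have "\<dots> = Poly_Mapping.lookup p k"
    by (simp add: sum.delta' in_keys_iff)
  finally show "Poly_Mapping.lookup (lin (\<lambda>m. Poly_Mapping.single m 1) p) k = Poly_Mapping.lookup p k" .
qed

lemma islin_ext:
  assumes "islin f" "islin g" "\<And>m. m \<in> Poly_Mapping.keys p \<Longrightarrow> f (Poly_Mapping.single m 1) = g (Poly_Mapping.single m 1)"
  shows "f p = g p"
proof -
  have "f p = f (lin (\<lambda>m. Poly_Mapping.single m 1) p)" by (simp add: lin_id)
  also have "\<dots> = lin (\<lambda>m. f (Poly_Mapping.single m 1)) p" by (rule islin_lin_comm[OF assms(1)])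
  also have "\<dots> = lin (\<lambda>m. g (Poly_Mapping.single m 1)) p" by (rule lin_cong) (use assms(3) in auto)
  also have "\<dots> = g (lin (\<lambda>m. Poly_Mapping.single m 1) p)" by (rule islin_lin_comm[OF assms(2), symmetric])
  finally show ?thesis by (simp add: lin_id)
qed

lemma lin_comp: "lin G (lin F p) = lin (\<lambda>m. lin G (F m)) p"
  by (rule islin_lin_comm) simp

section \<open>Fock model\<close>

type_synonym mono = "((sym \<times> nat) \<Rightarrow>\<^sub>0 nat) \<times> nat set"
type_synonym vec = "mono \<Rightarrow>\<^sub>0 complex"

definition sg :: "nat \<Rightarrow> nat set \<Rightarrow> complex" where
  "sg y S = (-1) ^ card {z\<in>S. z < y}"

lemma card_lt_insert:
  "card {z\<in>insert x S. z < (y::nat)} = card {z\<in>S. z < y} + (if x < y \<and> x \<notin> S then 1 else 0)"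
proof -
  have f: "finite {z\<in>S. z < y}" by (rule finite_subset[of _ "{..<y}"]) auto
  show ?thesis
  proof (cases "x < y \<and> x \<notin> S")
    case True
    then have "{z\<in>insert x S. z < y} = insert x {z\<in>S. z < y}" by auto
    then show ?thesis using f True by simp
  next
    case False
    then have "{z\<in>insert x S. z < y} = {z\<in>S. z < y}" by auto
    then show ?thesis using False by simp
  qed
qed

lemma sg_insert: "sg y (insert x S) = (if x < y \<and> x \<notin> S then - sg y S else sg y S)"
  unfolding sg_def card_lt_insert by simp

lemma sg_remove: "sg y (S - {x}) = (if x < y \<and> x \<in> S then - sg y S else sg y S)"
proof (cases "x \<in> S")
  case True
  then have "S = insert x (S - {x})" by auto
  then have "sg y S = sg y (insert x (S - {x}))" by simp
  also have "\<dots> = (if x < y then - sg y (S - {x}) else sg y (S - {x}))"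
    by (subst sg_insert) simp
  finally have h: "sg y S = (if x < y then - sg y (S - {x}) else sg y (S - {x}))" .
  show ?thesis using True h by (cases "x < y") simp_all
next
  case False
  then show ?thesis by simp
qed

lemma sg_sq [simp]: "sg y S * sg y S = 1"
  by (simp add: sg_def power_mult_distrib[symmetric] power_add[symmetric] flip: power_add)

definition mulOb :: "nat \<Rightarrow> mono \<Rightarrow> vec" where
  "mulOb y m = (if y \<in> snd m then 0 else Poly_Mapping.single (fst m, insert y (snd m)) (sg y (snd m)))"
definition derOb :: "nat \<Rightarrow> mono \<Rightarrow> vec" where
  "derOb y m = (if y \<in> snd m then Poly_Mapping.single (fst m, snd m - {y}) (sg y (snd m)) else 0)"
definition mulEb :: "sym \<times> nat \<Rightarrow> mono \<Rightarrow> vec" where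
  "mulEb x m = Poly_Mapping.single (fst m + Poly_Mapping.single x 1, snd m) 1"
definition derEb :: "sym \<times> nat \<Rightarrow> mono \<Rightarrow> vec" where
  "derEb x m = Poly_Mapping.single (fst m - Poly_Mapping.single x 1, snd m) (of_nat (Poly_Mapping.lookup (fst m) x))"

lemma oo_mm: "lin (mulOb y) (mulOb z m) = - lin (mulOb z) (mulOb y m)"
  by (cases m) (auto simp: mulOb_def sg_insert insert_commute single_uminus mult.commute)

lemma oo_dd: "lin (derOb y) (derOb z m) = - lin (derOb z) (derOb y m)"
  by (cases m) (auto simp: derOb_def sg_remove single_uminus mult.commute Diff_insert2[symmetric] insert_commute)

lemma oo_dm: "lin (derOb y) (mulOb z m) = (if y = z then Poly_Mapping.single m 1 else 0) - lin (mulOb z) (derOb y m)"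
  by (cases m) (auto simp: derOb_def mulOb_def sg_remove sg_insert insert_Diff_if single_uminus mult.commute insert_absorb)
lemma pm_add_sub: "(E::'a \<Rightarrow>\<^sub>0 nat) + Poly_Mapping.single x (Suc 0) - Poly_Mapping.single x (Suc 0) = E"
  by (rule poly_mapping_eqI) (simp add: lookup_add lookup_minus lookup_single when_def)

lemma pm_sub_add: "Poly_Mapping.lookup (E::'a \<Rightarrow>\<^sub>0 nat) x > 0 \<Longrightarrow> E - Poly_Mapping.single x (Suc 0) + Poly_Mapping.single x (Suc 0) = E"
  by (rule poly_mapping_eqI) (auto simp add: lookup_add lookup_minus lookup_single when_def)

lemma pm_sub_add_comm: "x \<noteq> w \<Longrightarrow> (E::'a \<Rightarrow>\<^sub>0 nat) + Poly_Mapping.single w (Suc 0) - Poly_Mapping.single x (Suc 0) = E - Poly_Mapping.single x (Suc 0) + Poly_Mapping.single w (Suc 0)"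
  by (rule poly_mapping_eqI) (auto simp add: lookup_add lookup_minus lookup_single when_def)

lemma pm_sub_sub_comm: "(E::'a \<Rightarrow>\<^sub>0 nat) - Poly_Mapping.single w (Suc 0) - Poly_Mapping.single x (Suc 0) = E - Poly_Mapping.single x (Suc 0) - Poly_Mapping.single w (Suc 0)"
  by (rule poly_mapping_eqI) (simp add: lookup_minus)

lemma ee_mm: "lin (mulEb x) (mulEb w m) = lin (mulEb w) (mulEb x m)"
  by (simp add: mulEb_def add_ac)

lemma ee_dd: "lin (derEb x) (derEb w m) = lin (derEb w) (derEb x m)"
  by (auto simp: derEb_def pm_sub_sub_comm lookup_minus lookup_single when_def mult.commute)

lemma ee_dm: "lin (derEb x) (mulEb w m) = (if x = w then Poly_Mapping.single m 1 else 0) + lin (mulEb w) (derEb x m)"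
proof (cases "x = w")
  case True
  show ?thesis
  proof (cases "Poly_Mapping.lookup (fst m) x > 0")
    case True': True
    then show ?thesis using True
      by (cases m) (simp add: mulEb_def derEb_def pm_add_sub pm_sub_add lookup_add single_add[symmetric])
  next
    case False
    then show ?thesis using True
      by (cases m) (simp add: mulEb_def derEb_def pm_add_sub lookup_add)
  qed
next
  case False
  then show ?thesis
    by (cases m) (simp add: mulEb_def derEb_def pm_sub_add_comm lookup_add lookup_single)
qed

lemma oe_mm: "lin (mulOb y) (mulEb x m) = lin (mulEb x) (mulOb y m)"
  by (simp add: mulOb_def mulEb_def)
lemma oe_dd: "lin (derOb y) (derEb x m) = lin (derEb x) (derOb y m)"
  by (simp add: derOb_def derEb_def mult.commute)
lemma oe_dm: "lin (derOb y) (mulEb x m) = lin (mulEb x) (derOb y m)"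
  by (simp add: derOb_def mulEb_def)
lemma eo_dm: "lin (derEb x) (mulOb y m) = lin (mulOb y) (derEb x m)"
  by (simp add: derEb_def mulOb_def mult.commute)
lemma islin_sc: "islin f \<Longrightarrow> islin (\<lambda>p. sc c (f p))"
  by (simp add: islin_def sc_add mult.commute)

definition oi :: "nat \<Rightarrow> nat \<Rightarrow> nat" where "oi a k = prod_encode (a, k)"

lemma oi_eq [simp]: "oi a k = oi b l \<longleftrightarrow> a = b \<and> k = l"
  by (auto simp: oi_def prod_encode_eq)

fun isodd :: "sym \<Rightarrow> bool" where
  "isodd (Alpha _) = True" | "isodd _ = False"

definition mulb :: "sym \<times> nat \<Rightarrow> mono \<Rightarrow> vec" where
  "mulb x = (case fst x of Alpha a \<Rightarrow> mulOb (oi a (snd x)) | _ \<Rightarrow> mulEb x)"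
definition derb :: "sym \<times> nat \<Rightarrow> mono \<Rightarrow> vec" where
  "derb x = (case fst x of Alpha a \<Rightarrow> derOb (oi a (snd x)) | _ \<Rightarrow> derEb x)"

definition mulv :: "sym \<times> nat \<Rightarrow> vec \<Rightarrow> vec" where "mulv x = lin (mulb x)"
definition derv :: "sym \<times> nat \<Rightarrow> vec \<Rightarrow> vec" where "derv x = lin (derb x)"

definition sig :: "sym \<Rightarrow> sym \<Rightarrow> complex" where
  "sig a b = (if isodd a \<and> isodd b then -1 else 1)"

lemma islin_mulv [simp]: "islin (mulv x)" by (simp add: mulv_def)
lemma islin_derv [simp]: "islin (derv x)" by (simp add: derv_def)

lemma G1b: "lin (mulb x) (mulb y m) = sc (sig (fst x) (fst y)) (lin (mulb y) (mulb x m))"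
  apply (cases x; cases y)
  subgoal for s k t l
    apply (cases s; cases t)
    apply (simp_all add: mulb_def sig_def sc_m1 lin_uminus)
    apply (rule oo_mm ee_mm oe_mm oe_mm[symmetric])+
    done
  done

lemma G2b: "lin (derb x) (derb y m) = sc (sig (fst x) (fst y)) (lin (derb y) (derb x m))"
  apply (cases x; cases y)
  subgoal for s k t l
    apply (cases s; cases t)
    apply (simp_all add: derb_def sig_def sc_m1 lin_uminus)
    apply (rule oo_dd ee_dd oe_dd oe_dd[symmetric])+
    done
  done

lemma G3b: "lin (derb x) (mulb y m) = (if x = y then Poly_Mapping.single m 1 else 0) + sc (sig (fst x) (fst y)) (lin (mulb y) (derb x m))"
  apply (cases x; cases y)
  subgoal for s k t l
    by (cases s; cases t) (simp_all add: mulb_def derb_def sig_def oo_dm ee_dm oe_dm eo_dm sc_m1 lin_uminus)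
  done

lemma islin_comp2: "islin (\<lambda>v. f (g v))" if "islin f" "islin g"
  using islin_comp[OF that] .

lemma G1: "mulv x (mulv y v) = sc (sig (fst x) (fst y)) (mulv y (mulv x v))"
proof (rule islin_ext[of _ _ v])
  show "islin (\<lambda>v. mulv x (mulv y v))" by (rule islin_comp2) simp_all
  show "islin (\<lambda>v. sc (sig (fst x) (fst y)) (mulv y (mulv x v)))"
    by (rule islin_sc, rule islin_comp2) simp_all
qed (simp only: mulv_def lin_single sc_1, rule G1b)

lemma G2: "derv x (derv y v) = sc (sig (fst x) (fst y)) (derv y (derv x v))"
proof (rule islin_ext[of _ _ v])
  show "islin (\<lambda>v. derv x (derv y v))" by (rule islin_comp2) simp_all
  show "islin (\<lambda>v. sc (sig (fst x) (fst y)) (derv y (derv x v)))"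
    by (rule islin_sc, rule islin_comp2) simp_all
qed (simp only: derv_def lin_single sc_1, rule G2b)

lemma G3: "derv x (mulv y v) = (if x = y then v else 0) + sc (sig (fst x) (fst y)) (mulv y (derv x v))"
proof (rule islin_ext[of _ _ v])
  show "islin (\<lambda>v. derv x (mulv y v))" by (rule islin_comp2) simp_all
  have l: "islin (\<lambda>v. sc (sig (fst x) (fst y)) (mulv y (derv x v)))"
    by (rule islin_sc, rule islin_comp2) simp_all
  show "islin (\<lambda>v. (if x = y then v else 0) + sc (sig (fst x) (fst y)) (mulv y (derv x v)))"
  proof (cases "x = y")
    case True then show ?thesis using islin_add[OF islin_id l] by simp
  next
    case False then show ?thesis using islin_add[OF islin_0 l] by simp
  qed
qed (simp only: mulv_def derv_def lin_single sc_1, rule G3b)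

section \<open>The representation operators\<close>

definition Dop :: "nat \<Rightarrow> sym \<Rightarrow> sym \<Rightarrow> vec \<Rightarrow> vec" where
  "Dop n a b v = (\<Sum>k\<in>{1..n}. mulv (a, k) (derv (b, k) v))"

definition Mop :: "nat \<Rightarrow> sym \<Rightarrow> sym \<Rightarrow> vec \<Rightarrow> vec" where
  "Mop n a b v = (case b of Prop j \<Rightarrow> if j \<in> {1..n} then mulv (a, j) v else 0 | _ \<Rightarrow> 0)"

definition Eop :: "nat \<Rightarrow> sym \<Rightarrow> sym \<Rightarrow> vec \<Rightarrow> vec" where
  "Eop n a b v = Dop n a b v + Mop n a b v"

lemma islin_Dop [simp]: "islin (Dop n a b)"
  unfolding Dop_def
  by (rule islin_sumf, rule islin_comp2) simp_all

lemma islin_Mop [simp]: "islin (Mop n a b)"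
proof (cases b)
  case (Prop j)
  then show ?thesis unfolding Mop_def
    by (cases "j \<in> {1..n}") (simp_all add: islin_0 del: atLeastAtMost_iff)
qed (simp_all add: Mop_def[abs_def] islin_0)

lemma islin_Eop [simp]: "islin (Eop n a b)"
  unfolding Eop_def[abs_def] by (rule islin_add) simp_all

fun ob :: "sym \<Rightarrow> nat" where
  "ob (Alpha _) = 1" | "ob _ = 0"

lemma sig_ob: "sig a b = (-1) ^ (ob a * ob b)"
  by (cases a; cases b) (simp_all add: sig_def)

lemma sgn_ob: "sgn a b c d = (-1) ^ ((ob a + ob b) * (ob c + ob d))"
  by (cases a; cases b; cases c; cases d) (simp_all add: sgn_def)

lemma sign_id: "sig b c * (sig a c * sig b d) = sgn a b c d * sig d a"
  by (cases a; cases b; cases c; cases d) (simp_all add: sig_def sgn_def)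

lemma sgn_sq: "sgn a b c d * sgn a b c d = 1"
  by (simp add: sgn_def flip: power_add)

lemma sig_sq: "sig a b * sig a b = 1"
  by (simp add: sig_def)

lemma sgn_sym: "sgn c d a b = sgn a b c d"
  by (simp add: sgn_def mult.commute)

lemma lin_if0: "islin f \<Longrightarrow> f (if P then Y else 0) = (if P then f Y else 0)"
  by (simp add: islin_zero)

lemma DD_pt1:
  "mulv (a,k) (derv (b,k) (mulv (c,l) (derv (d,l) v))) =
     (if b = c \<and> k = l then mulv (a,k) (derv (d,l) v) else 0) +
     sc (sig b c * (sig a c * sig b d)) (mulv (c,l) (mulv (a,k) (derv (d,l) (derv (b,k) v))))"
proof -
  have g3: "derv (b,k) (mulv (c,l) X) = (if b = c \<and> k = l then X else 0) + sc (sig b c) (mulv (c,l) (derv (b,k) X))" for X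
    using G3[of "(b,k)" "(c,l)" X] by simp
  have g2: "derv (b,k) (derv (d,l) v) = sc (sig b d) (derv (d,l) (derv (b,k) v))"
    using G2[of "(b,k)" "(d,l)" v] by simp
  have g1: "mulv (a,k) (mulv (c,l) Z) = sc (sig a c) (mulv (c,l) (mulv (a,k) Z))" for Z
    using G1[of "(a,k)" "(c,l)" Z] by simp
  show ?thesis
    by (simp add: g3 g2 g1 islinD[OF islin_mulv] lin_if0 mult_ac)
qed

lemma DD_pt2:
  "mulv (c,l) (derv (d,l) (mulv (a,k) (derv (b,k) v))) =
     (if d = a \<and> l = k then mulv (c,l) (derv (b,k) v) else 0) +
     sc (sig d a) (mulv (c,l) (mulv (a,k) (derv (d,l) (derv (b,k) v))))"
proof -
  have g3: "derv (d,l) (mulv (a,k) X) = (if d = a \<and> l = k then X else 0) + sc (sig d a) (mulv (a,k) (derv (d,l) X))" for X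
    using G3[of "(d,l)" "(a,k)" X] by simp
  show ?thesis
    by (simp add: g3 islinD[OF islin_mulv] lin_if0)
qed

lemma DD_pt:
  "mulv (a,k) (derv (b,k) (mulv (c,l) (derv (d,l) v))) - sc (sgn a b c d) (mulv (c,l) (derv (d,l) (mulv (a,k) (derv (b,k) v))))
   = (if b = c \<and> k = l then mulv (a,k) (derv (d,l) v) else 0) - sc (sgn a b c d) (if d = a \<and> l = k then mulv (c,l) (derv (b,k) v) else 0)"
  unfolding DD_pt1[of a k b c l d v] DD_pt2[of c l d a k b v] sign_id by (simp add: sc_add sc_diff)

lemma DD: "Dop n a b (Dop n c d v) - sc (sgn a b c d) (Dop n c d (Dop n a b v))
   = (if b = c then Dop n a d v else 0) - sc (sgn a b c d) (if d = a then Dop n c b v else 0)"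
proof -
  let ?s = "sgn a b c d"
  have e1: "Dop n a b (Dop n c d v) = (\<Sum>k\<in>{1..n}. \<Sum>l\<in>{1..n}. mulv (a,k) (derv (b,k) (mulv (c,l) (derv (d,l) v))))"
    by (simp add: Dop_def islin_sum[OF islin_mulv] islin_sum[OF islin_derv])
  have e2: "Dop n c d (Dop n a b v) = (\<Sum>k\<in>{1..n}. \<Sum>l\<in>{1..n}. mulv (c,l) (derv (d,l) (mulv (a,k) (derv (b,k) v))))"
    by (simp add: Dop_def islin_sum[OF islin_mulv] islin_sum[OF islin_derv]) (rule sum.swap)
  have "Dop n a b (Dop n c d v) - sc ?s (Dop n c d (Dop n a b v))
     = (\<Sum>k\<in>{1..n}. \<Sum>l\<in>{1..n}. mulv (a,k) (derv (b,k) (mulv (c,l) (derv (d,l) v))) - sc ?s (mulv (c,l) (derv (d,l) (mulv (a,k) (derv (b,k) v)))))"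
    by (simp add: e1 e2 sc_sum sum_subtractf)
  also have "\<dots> = (\<Sum>k\<in>{1..n}. \<Sum>l\<in>{1..n}. (if b = c \<and> k = l then mulv (a,k) (derv (d,l) v) else 0) - sc ?s (if d = a \<and> l = k then mulv (c,l) (derv (b,k) v) else 0))"
    by (simp only: DD_pt)
  also have "\<dots> = (if b = c then Dop n a d v else 0) - sc ?s (if d = a then Dop n c b v else 0)"
    by (simp add: sum_subtractf Dop_def sc_sum lin_if0 if_distrib[of "sc ?s"] sum.If_cases)
  finally show ?thesis .
qed

lemma sgn_prop: "sgn a b c (Prop j) = sig b c * sig a c"
  by (cases a; cases b; cases c) (simp_all add: sig_def sgn_def)

lemma sgn_prop2: "sgn a (Prop j) c (Prop l) = sig a c"
  by (cases a; cases c) (simp_all add: sig_def sgn_def)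

lemma DM: "Dop n a b (Mop n c d v) - sc (sgn a b c d) (Mop n c d (Dop n a b v)) = (if b = c then Mop n a d v else 0)"
proof (cases "\<exists>j. d = Prop j \<and> j \<in> {1..n}")
  case True
  then obtain j where d: "d = Prop j" and j: "j \<in> {1..n}" by blast
  have pt: "mulv (a,k) (derv (b,k) (mulv (c,j) v)) = (if b = c \<and> k = j then mulv (a,k) v else 0) + sc (sig b c * sig a c) (mulv (c,j) (mulv (a,k) (derv (b,k) v)))" for k
  proof -
    have g3: "derv (b,k) (mulv (c,j) v) = (if b = c \<and> k = j then v else 0) + sc (sig b c) (mulv (c,j) (derv (b,k) v))"
      using G3[of "(b,k)" "(c,j)" v] by simp
    have g1: "mulv (a,k) (mulv (c,j) Z) = sc (sig a c) (mulv (c,j) (mulv (a,k) Z))" for Z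
      using G1[of "(a,k)" "(c,j)" Z] by simp
    show ?thesis by (simp add: g3 g1 islinD[OF islin_mulv] lin_if0 mult_ac)
  qed
  have "Dop n a b (mulv (c,j) v) = (\<Sum>k\<in>{1..n}. (if b = c \<and> k = j then mulv (a,k) v else 0) + sc (sig b c * sig a c) (mulv (c,j) (mulv (a,k) (derv (b,k) v))))"
    by (simp add: Dop_def pt)
  also have "\<dots> = (\<Sum>k\<in>{1..n}. (if b = c \<and> k = j then mulv (a,k) v else 0)) + (\<Sum>k\<in>{1..n}. sc (sig b c * sig a c) (mulv (c,j) (mulv (a,k) (derv (b,k) v))))"
    by (rule sum.distrib)
  also have "(\<Sum>k\<in>{1..n}. (if b = c \<and> k = j then mulv (a,k) v else 0)) = (if b = c then mulv (a,j) v else 0)"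
    using j by (cases "b = c") (simp_all add: sum.delta del: atLeastAtMost_iff)
  also have "(\<Sum>k\<in>{1..n}. sc (sig b c * sig a c) (mulv (c,j) (mulv (a,k) (derv (b,k) v)))) = sc (sig b c * sig a c) (mulv (c,j) (Dop n a b v))"
    by (simp only: Dop_def islin_sum[OF islin_mulv] sc_sum)
  finally show ?thesis using j d by (simp add: Mop_def sgn_prop del: atLeastAtMost_iff)
next
  case False
  then have "Mop n c d = (\<lambda>v. 0)" "Mop n a d = (\<lambda>v. 0)"
    by (cases d; auto simp: Mop_def[abs_def])+
  then show ?thesis by (simp add: islin_zero)
qed

lemma MM: "Mop n a b (Mop n c d v) - sc (sgn a b c d) (Mop n c d (Mop n a b v)) = 0"
proof (cases "(\<exists>j. b = Prop j \<and> j \<in> {1..n}) \<and> (\<exists>l. d = Prop l \<and> l \<in> {1..n})")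
  case True
  then obtain j l where b: "b = Prop j" "j \<in> {1..n}" and d: "d = Prop l" "l \<in> {1..n}" by blast
  have "mulv (a,j) (mulv (c,l) v) = sc (sig a c) (mulv (c,l) (mulv (a,j) v))"
    using G1[of "(a,j)" "(c,l)" v] by simp
  then show ?thesis using b d by (simp add: Mop_def sgn_prop2 del: atLeastAtMost_iff)
next
  case False
  then have "Mop n a b = (\<lambda>v. 0) \<or> Mop n c d = (\<lambda>v. 0)"
    by (cases b; cases d; auto simp: Mop_def[abs_def])
  then show ?thesis by (auto simp: islin_zero)
qed

lemma MD: "Mop n a b (Dop n c d v) - sc (sgn a b c d) (Dop n c d (Mop n a b v)) = - sc (sgn a b c d) (if a = d then Mop n c b v else 0)"
proof -
  let ?s = "sgn a b c d"
  have h: "Dop n c d (Mop n a b v) - sc ?s (Mop n a b (Dop n c d v)) = (if d = a then Mop n c b v else 0)"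
    using DM[of n c d a b v] by (simp add: sgn_sym)
  have "Mop n a b (Dop n c d v) - sc ?s (Dop n c d (Mop n a b v)) = - sc ?s (Dop n c d (Mop n a b v) - sc ?s (Mop n a b (Dop n c d v)))"
    by (simp add: sc_diff sgn_sq)
  also have "\<dots> = - sc ?s (if a = d then Mop n c b v else 0)"
    by (simp only: h eq_commute[of d a])
  finally show ?thesis .
qed

lemma vec4: "(A + B + (C + D)) - sc s (A' + B' + (C' + D')) = (A - sc s A') + (B - sc s C') + (C - sc s B') + (D - sc s (D'::vec))"
  by (simp add: sc_add algebra_simps)

lemma EE: "Eop n a b (Eop n c d v) - sc (sgn a b c d) (Eop n c d (Eop n a b v))
   = (if b = c then Eop n a d v else 0) - sc (sgn a b c d) (if a = d then Eop n c b v else 0)"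
proof -
  let ?s = "sgn a b c d"
  have "Eop n a b (Eop n c d v) - sc ?s (Eop n c d (Eop n a b v)) =
     (Dop n a b (Dop n c d v) - sc ?s (Dop n c d (Dop n a b v))) +
     (Dop n a b (Mop n c d v) - sc ?s (Mop n c d (Dop n a b v))) +
     (Mop n a b (Dop n c d v) - sc ?s (Dop n c d (Mop n a b v))) +
     (Mop n a b (Mop n c d v) - sc ?s (Mop n c d (Mop n a b v)))"
    unfolding Eop_def islinD(1)[OF islin_Dop] islinD(1)[OF islin_Mop] by (rule vec4)
  also have "\<dots> = (if b = c then Eop n a d v else 0) - sc ?s (if a = d then Eop n c b v else 0)"
    unfolding DD DM MD MM by (cases "b = c"; cases "a = d") (simp_all add: Eop_def sc_add sc_uminus eq_commute[of d a])
  finally show ?thesis .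
qed

section \<open>Action of the free algebra\<close>

definition Ew :: "nat \<Rightarrow> letter list \<Rightarrow> vec \<Rightarrow> vec" where
  "Ew n w v = foldr (\<lambda>l q. Eop n (fst l) (snd l) q) w v"

lemma Ew_Nil [simp]: "Ew n [] v = v" by (simp add: Ew_def)
lemma Ew_Cons [simp]: "Ew n (l # w) v = Eop n (fst l) (snd l) (Ew n w v)" by (simp add: Ew_def)
lemma Ew_append: "Ew n (u @ w) v = Ew n u (Ew n w v)" by (simp add: Ew_def)

lemma islin_Ew [simp]: "islin (Ew n w)"
proof (induction w)
  case Nil then show ?case by (simp add: islin_id[unfolded Ew_Nil[symmetric]] Ew_def[abs_def] islin_def)
next
  case (Cons l w)
  have "islin (\<lambda>v. Eop n (fst l) (snd l) (Ew n w v))" by (rule islin_comp2) (simp_all add: Cons)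
  then show ?case by (simp add: Ew_Cons[abs_def])
qed

definition Act :: "nat \<Rightarrow> fa \<Rightarrow> vec \<Rightarrow> vec" where
  "Act n x v = lin (\<lambda>w. Ew n w v) x"

lemma islin_Act [simp]: "islin (Act n x)"
proof -
  have "islin (\<lambda>v. \<Sum>w\<in>Poly_Mapping.keys x. sc (Poly_Mapping.lookup x w) (Ew n w v))"
    by (rule islin_sumf, rule islin_sc) simp
  then show ?thesis by (simp add: Act_def[abs_def] lin_def)
qed

lemma Act_add: "Act n (x + y) v = Act n x v + Act n y v" by (simp add: Act_def lin_add)
lemma Act_diff: "Act n (x - y) v = Act n x v - Act n y v" by (simp add: Act_def lin_diff)
lemma Act_zero [simp]: "Act n 0 v = 0" by (simp add: Act_def)
lemma Act_single [simp]: "Act n (Poly_Mapping.single w c) v = sc c (Ew n w v)" by (simp add: Act_def)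

lemma Act_fmul: "Act n (fmul x y) v = Act n x (Act n y v)"
proof -
  have "Act n (fmul x y) v = (\<Sum>u\<in>Poly_Mapping.keys x. \<Sum>w\<in>Poly_Mapping.keys y.
      sc (Poly_Mapping.lookup x u * Poly_Mapping.lookup y w) (Ew n u (Ew n w v)))"
    by (simp add: fmul_def Act_def lin_sum Ew_append)
  also have "\<dots> = Act n x (Act n y v)"
    by (simp add: Act_def lin_def islin_sum[OF islin_Ew] islinD[OF islin_Ew] sc_sum)
  finally show ?thesis .
qed

lemma Act_e [simp]: "Act n (e a b) v = Eop n a b v" by (simp add: e_def)
lemma Act_fscal [simp]: "Act n (fscal c) v = sc c v" by (simp add: fscal_def)

lemma Act_rel: "Act n (rel a b c d) v = 0"
proof -
  have i1: "Act n (if b = c then e a d else 0) v = (if b = c then Eop n a d v else 0)" by simp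
  have i2: "Act n (if a = d then e c b else 0) v = (if a = d then Eop n c b v else 0)" by simp
  show ?thesis
    unfolding rel_def Act_diff Act_fmul Act_e Act_fscal i1 i2 sgn_def[symmetric]
    using EE[of n a b c d v] by simp
qed

lemma Jid_Act: "x \<in> Jid n \<Longrightarrow> Act n x v = 0"
proof (induction x arbitrary: v rule: Jid.induct)
  case (gen a b c d) show ?case by (rule Act_rel)
next
  case zero then show ?case by simp
next
  case (add x y) then show ?case by (simp add: Act_add)
next
  case (mult x u w) then show ?case by (simp add: Act_fmul islin_zero)
qed

section \<open>Degree in a virtual symbol\<close>

definition cntE :: "sym \<Rightarrow> ((sym \<times> nat) \<Rightarrow>\<^sub>0 nat) \<Rightarrow> nat" where
  "cntE g E = (\<Sum>k\<in>{k. Poly_Mapping.lookup E (g, k) \<noteq> 0}. Poly_Mapping.lookup E (g, k))"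

lemma finite_cntE_set: "finite {k. Poly_Mapping.lookup E (g, k) \<noteq> 0}"
proof -
  have "{k. Poly_Mapping.lookup E (g, k) \<noteq> 0} \<subseteq> snd ` Poly_Mapping.keys E"
    by (force simp: in_keys_iff image_iff)
  then show ?thesis by (rule finite_subset) simp
qed

lemma cntE_superset: "finite K \<Longrightarrow> {k. Poly_Mapping.lookup E (g, k) \<noteq> 0} \<subseteq> K \<Longrightarrow>
   cntE g E = (\<Sum>k\<in>K. Poly_Mapping.lookup E (g, k))"
  unfolding cntE_def by (rule sum.mono_neutral_left) auto

lemma cntE_add: "cntE g (E + Poly_Mapping.single x 1) = cntE g E + (if fst x = g then 1 else 0)"
proof -
  obtain h k0 where x: "x = (h, k0)" by (cases x)
  let ?K = "insert k0 {k. Poly_Mapping.lookup E (g, k) \<noteq> 0}"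
  have fK: "finite ?K" by (rule finite.insertI[OF finite_cntE_set])
  have "cntE g (E + Poly_Mapping.single x 1) = (\<Sum>k\<in>?K. Poly_Mapping.lookup E (g, k) + (if h = g \<and> k0 = k then Suc 0 else 0))"
    by (rule trans[OF cntE_superset[OF fK]]) (auto simp: lookup_add lookup_single when_def x One_nat_def)
  also have "\<dots> = (\<Sum>k\<in>?K. Poly_Mapping.lookup E (g, k)) + (\<Sum>k\<in>?K. (if h = g \<and> k0 = k then Suc 0 else 0))"
    by (rule sum.distrib)
  also have "(\<Sum>k\<in>?K. Poly_Mapping.lookup E (g, k)) = cntE g E"
    by (rule cntE_superset[symmetric, OF fK]) auto
  also have "(\<Sum>k\<in>?K. (if h = g \<and> k0 = k then Suc 0 else 0::nat)) = (if fst x = g then 1 else 0)"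
    using fK by (cases "h = g") (simp_all add: x sum.delta)
  finally show ?thesis .
qed

lemma cntE_sub: "Poly_Mapping.lookup E x > 0 \<Longrightarrow> cntE g (E - Poly_Mapping.single x 1) + (if fst x = g then 1 else 0) = cntE g E"
  using cntE_add[of g "E - Poly_Mapping.single x 1" x] pm_sub_add[of E x] by simp

definition cntS :: "nat \<Rightarrow> nat set \<Rightarrow> nat" where
  "cntS a S = card {k. oi a k \<in> S}"

lemma finite_cntS_set: "finite S \<Longrightarrow> finite {k. oi a k \<in> S}"
proof -
  assume f: "finite S"
  have "inj_on (oi a) {k. oi a k \<in> S}" by (auto simp: inj_on_def)
  moreover have "oi a ` {k. oi a k \<in> S} \<subseteq> S" by auto
  ultimately show ?thesis using f by (meson finite_imageD finite_subset)
qed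

lemma cntS_insert: "finite S \<Longrightarrow> oi b k \<notin> S \<Longrightarrow> cntS a (insert (oi b k) S) = cntS a S + (if a = b then 1 else 0)"
proof -
  assume f: "finite S" and n: "oi b k \<notin> S"
  show ?thesis
  proof (cases "a = b")
    case True
    then have "{k'. oi a k' \<in> insert (oi b k) S} = insert k {k'. oi a k' \<in> S}" by auto
    then show ?thesis using True n finite_cntS_set[OF f, of a] by (simp add: cntS_def)
  next
    case False
    then have "{k'. oi a k' \<in> insert (oi b k) S} = {k'. oi a k' \<in> S}" by auto
    then show ?thesis using False by (simp add: cntS_def)
  qed
qed

lemma cntS_remove: "finite S \<Longrightarrow> oi b k \<in> S \<Longrightarrow> cntS a (S - {oi b k}) + (if a = b then 1 else 0) = cntS a S"
proof -
  assume f: "finite S" and n: "oi b k \<in> S"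
  have "S = insert (oi b k) (S - {oi b k})" using n by auto
  then have "cntS a S = cntS a (insert (oi b k) (S - {oi b k}))" by simp
  also have "\<dots> = cntS a (S - {oi b k}) + (if a = b then 1 else 0)"
    by (rule cntS_insert) (use f in auto)
  finally show ?thesis by simp
qed

definition dg :: "sym \<Rightarrow> mono \<Rightarrow> nat" where
  "dg g m = cntE g (fst m) + (case g of Alpha a \<Rightarrow> cntS a (snd m) | _ \<Rightarrow> 0)"

definition Inv :: "sym \<Rightarrow> int \<Rightarrow> vec \<Rightarrow> bool" where
  "Inv g d v \<longleftrightarrow> (\<forall>m\<in>Poly_Mapping.keys v. finite (snd m) \<and> int (dg g m) = d)"

lemma keys_lin: "Poly_Mapping.keys (lin F p) \<subseteq> (\<Union>m\<in>Poly_Mapping.keys p. Poly_Mapping.keys (F m))"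
proof -
  have "Poly_Mapping.keys (lin F p) \<subseteq> (\<Union>m\<in>Poly_Mapping.keys p. Poly_Mapping.keys (sc (Poly_Mapping.lookup p m) (F m)))"
    unfolding lin_def by (rule keys_sum)
  also have "\<dots> \<subseteq> (\<Union>m\<in>Poly_Mapping.keys p. Poly_Mapping.keys (F m))"
    by (auto simp: in_keys_iff)
  finally show ?thesis .
qed

lemma Inv_lin:
  assumes "Inv g d v" "\<And>m. finite (snd m) \<Longrightarrow> int (dg g m) = d \<Longrightarrow> Inv g d' (F m)"
  shows "Inv g d' (lin F v)"
  using assms keys_lin[of F v] unfolding Inv_def by blast

lemma Inv_add: "Inv g d v \<Longrightarrow> Inv g d w \<Longrightarrow> Inv g d (v + w)"
  using keys_add[of v w] unfolding Inv_def by blast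

lemma Inv_zero [simp]: "Inv g d 0" by (simp add: Inv_def)

lemma Inv_sum: "(\<And>k. k \<in> K \<Longrightarrow> Inv g d (f k)) \<Longrightarrow> Inv g d (sum f K)"
  by (induction K rule: infinite_finite_induct) (auto intro: Inv_add)

lemma Inv_single: "finite (snd m) \<Longrightarrow> int (dg g m) = d \<Longrightarrow> Inv g d (Poly_Mapping.single m c)"
  by (simp add: Inv_def)

lemma Inv_neg: "Inv g d v \<Longrightarrow> d < 0 \<Longrightarrow> v = 0"
  unfolding Inv_def by (metis keys_eq_empty equals0I of_nat_less_0_iff)

lemma dg_insert: "finite S \<Longrightarrow> oi a k \<notin> S \<Longrightarrow> int (dg g (E, insert (oi a k) S)) = int (dg g (E, S)) + (if Alpha a = g then 1 else 0)"
  by (cases g) (simp_all add: dg_def cntS_insert)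

lemma dg_remove: "finite S \<Longrightarrow> oi a k \<in> S \<Longrightarrow> int (dg g (E, S - {oi a k})) = int (dg g (E, S)) - (if Alpha a = g then 1 else 0)"
proof (cases g)
  case (Alpha a')
  assume f: "finite S" and y: "oi a k \<in> S"
  have "cntS a' (S - {oi a k}) + (if a' = a then 1 else 0) = cntS a' S" by (rule cntS_remove[OF f y])
  then show ?thesis using Alpha by (auto simp: dg_def)
qed (simp_all add: dg_def)

lemma dg_addE: "int (dg g (E + Poly_Mapping.single x 1, S)) = int (dg g (E, S)) + (if fst x = g then 1 else 0)"
  using cntE_add[of g E x] by (cases g) (simp_all add: dg_def)

lemma dg_subE: "Poly_Mapping.lookup E x > 0 \<Longrightarrow> int (dg g (E - Poly_Mapping.single x 1, S)) = int (dg g (E, S)) - (if fst x = g then 1 else 0)"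
  using cntE_sub[of E x g] by (cases g) (auto simp: dg_def)

lemma Inv_mulv: "Inv g d v \<Longrightarrow> Inv g (d + (if fst x = g then 1 else 0)) (mulv x v)"
  unfolding mulv_def
proof (rule Inv_lin)
  fix m assume f: "finite (snd m)" and dm: "int (dg g m) = d"
  obtain E S where m: "m = (E, S)" by (cases m)
  obtain h k where x: "x = (h, k)" by (cases x)
  show "Inv g (d + (if fst x = g then 1 else 0)) (mulb x m)"
  proof (cases h)
    case (Alpha a)
    show ?thesis
    proof (cases "oi a k \<in> S")
      case True then show ?thesis by (simp add: mulb_def mulOb_def x m Alpha)
    next
      case False
      have "mulb x m = Poly_Mapping.single (E, insert (oi a k) S) (sg (oi a k) S)"
        using False by (simp add: mulb_def mulOb_def x m Alpha)
      then show ?thesis using f dm False dg_insert[of S a k g E]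
        by (simp add: Inv_single m x Alpha)
    qed
  next
    case (Beta b)
    have "mulb x m = Poly_Mapping.single (E + Poly_Mapping.single x 1, S) 1"
      by (simp add: mulb_def mulEb_def x m Beta)
    then show ?thesis using f dm dg_addE[of g E x S] by (simp add: Inv_single m)
  next
    case (Prop b)
    have "mulb x m = Poly_Mapping.single (E + Poly_Mapping.single x 1, S) 1"
      by (simp add: mulb_def mulEb_def x m Prop)
    then show ?thesis using f dm dg_addE[of g E x S] by (simp add: Inv_single m)
  qed
qed

lemma Inv_derv: "Inv g d v \<Longrightarrow> Inv g (d - (if fst x = g then 1 else 0)) (derv x v)"
  unfolding derv_def
proof (rule Inv_lin)
  fix m assume f: "finite (snd m)" and dm: "int (dg g m) = d"
  obtain E S where m: "m = (E, S)" by (cases m)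
  obtain h k where x: "x = (h, k)" by (cases x)
  show "Inv g (d - (if fst x = g then 1 else 0)) (derb x m)"
  proof (cases h)
    case (Alpha a)
    show ?thesis
    proof (cases "oi a k \<in> S")
      case False then show ?thesis by (simp add: derb_def derOb_def x m Alpha)
    next
      case True
      have "derb x m = Poly_Mapping.single (E, S - {oi a k}) (sg (oi a k) S)"
        using True by (simp add: derb_def derOb_def x m Alpha)
      then show ?thesis using f dm True dg_remove[of S a k g E]
        by (simp add: Inv_single m x Alpha)
    qed
  next
    case (Beta b)
    have e: "derb x m = Poly_Mapping.single (E - Poly_Mapping.single x 1, S) (of_nat (Poly_Mapping.lookup E x))"
      by (simp add: derb_def derEb_def x m Beta)
    show ?thesis
    proof (cases "Poly_Mapping.lookup E x > 0")
      case False then show ?thesis using e by simp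
    next
      case True
      then show ?thesis using e f dm dg_subE[OF True, of g S] by (simp add: Inv_single m)
    qed
  next
    case (Prop b)
    have e: "derb x m = Poly_Mapping.single (E - Poly_Mapping.single x 1, S) (of_nat (Poly_Mapping.lookup E x))"
      by (simp add: derb_def derEb_def x m Prop)
    show ?thesis
    proof (cases "Poly_Mapping.lookup E x > 0")
      case False then show ?thesis using e by simp
    next
      case True
      then show ?thesis using e f dm dg_subE[OF True, of g S] by (simp add: Inv_single m)
    qed
  qed
qed

lemma lin_zero_fun: "(\<And>m. m \<in> Poly_Mapping.keys p \<Longrightarrow> F m = 0) \<Longrightarrow> lin F p = 0"
  by (simp add: lin_def)

lemma lookup_le_cntE: "Poly_Mapping.lookup E (g, k) \<le> cntE g E"
proof (cases "Poly_Mapping.lookup E (g, k) = 0")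
  case False
  then show ?thesis unfolding cntE_def
    by (intro member_le_sum[where f = "\<lambda>k. Poly_Mapping.lookup E (g, k)"]) (use finite_cntE_set[of E g] in auto)
qed simp

lemma derv_kill: "Inv g 0 v \<Longrightarrow> fst x = g \<Longrightarrow> derv x v = 0"
  unfolding derv_def
proof (rule lin_zero_fun)
  fix m assume I: "Inv g 0 v" and xg: "fst x = g" and mk: "m \<in> Poly_Mapping.keys v"
  then have f: "finite (snd m)" and d0: "dg g m = 0" by (auto simp: Inv_def)
  obtain E S where m: "m = (E, S)" by (cases m)
  obtain h k where x: "x = (h, k)" by (cases x)
  have cE: "cntE g E = 0" using d0 m by (simp add: dg_def)
  show "derb x m = 0"
  proof (cases h)
    case (Alpha a)
    have ga: "g = Alpha a" using xg x Alpha by simp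
    have cS: "cntS a S = 0" using d0 m ga by (simp add: dg_def)
    have "oi a k \<notin> S"
    proof
      assume "oi a k \<in> S"
      then have "k \<in> {k. oi a k \<in> S}" by simp
      then have "card {k. oi a k \<in> S} \<noteq> 0" using finite_cntS_set[of S a] f m by auto
      then show False using cS by (simp add: cntS_def)
    qed
    then show ?thesis by (simp add: derb_def derOb_def x m Alpha)
  next
    case (Beta b)
    have "Poly_Mapping.lookup E x = 0" using lookup_le_cntE[of E g k] cE x xg by simp
    then show ?thesis by (simp add: derb_def derEb_def x m Beta)
  next
    case (Prop b)
    have "Poly_Mapping.lookup E x = 0" using lookup_le_cntE[of E g k] cE x xg by simp
    then show ?thesis by (simp add: derb_def derEb_def x m Prop)
  qed
qed

lemma Inv_Eop:
  assumes g: "virtual g" and I: "Inv g d v"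
  shows "Inv g (d + (if a = g then 1 else 0) - (if b = g then 1 else 0)) (Eop n a b v)"
proof -
  let ?d = "d + (if a = g then 1 else 0) - (if b = g then 1 else 0)"
  have D: "Inv g ?d (Dop n a b v)"
    unfolding Dop_def
  proof (rule Inv_sum)
    fix k
    have "Inv g (d - (if b = g then 1 else 0)) (derv (b, k) v)" using Inv_derv[OF I, of "(b,k)"] by simp
    from Inv_mulv[OF this, of "(a,k)"] show "Inv g ?d (mulv (a, k) (derv (b, k) v))"
      by (simp add: algebra_simps)
  qed
  have M: "Inv g ?d (Mop n a b v)"
  proof (cases b)
    case (Prop j)
    then have "b \<noteq> g" using g by auto
    then show ?thesis using Inv_mulv[OF I, of "(a,j)"] Prop by (simp add: Mop_def)
  qed (simp_all add: Mop_def)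
  show ?thesis unfolding Eop_def by (rule Inv_add[OF D M])
qed

lemma Eop_kill:
  assumes g: "virtual g" and I: "Inv g 0 v" and b: "b = g"
  shows "Eop n a b v = 0"
proof -
  have "Dop n a b v = 0" unfolding Dop_def using derv_kill[OF I, of "(b,_)"] b by (simp add: islin_zero)
  moreover have "Mop n a b v = 0" using g unfolding b by (cases g) (simp_all add: Mop_def)
  ultimately show ?thesis by (simp add: Eop_def)
qed

lemma fold_zero: "fold (\<lambda>l q. Eop n (fst l) (snd l) q) r 0 = 0"
  by (induction r) (simp_all add: islin_zero)

lemma fold_kill:
  "Inv g d v \<Longrightarrow> virtual g \<Longrightarrow> i < length r \<Longrightarrow>
   int (length (filter (\<lambda>l. snd l = g) (take (Suc i) r))) > d + int (length (filter (\<lambda>l. fst l = g) (take i r))) \<Longrightarrow>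
   fold (\<lambda>l q. Eop n (fst l) (snd l) q) r v = 0"
proof (induction r arbitrary: i d v)
  case Nil then show ?case by simp
next
  case (Cons l r)
  obtain a b where l: "l = (a, b)" by (cases l)
  let ?d' = "d + (if a = g then 1 else 0) - (if b = g then 1 else 0)"
  have I': "Inv g ?d' (Eop n a b v)" by (rule Inv_Eop[OF Cons.prems(2,1)])
  show ?case
  proof (cases i)
    case 0
    have "Eop n a b v = 0"
    proof (cases "b = g")
      case True
      then have "d \<le> 0" using Cons.prems(4) 0 l by simp
      then show ?thesis
      proof (cases "d < 0")
        case True then show ?thesis using Inv_neg[OF Cons.prems(1)] by (simp add: islin_zero)
      next
        case False then have "d = 0" using \<open>d \<le> 0\<close> by simp
        then show ?thesis using Eop_kill[OF Cons.prems(2) _ True] Cons.prems(1) by simp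
      qed
    next
      case False
      then have "d < 0" using Cons.prems(4) 0 l by simp
      then show ?thesis using Inv_neg[OF Cons.prems(1)] by (simp add: islin_zero)
    qed
    then show ?thesis using l by (simp add: fold_zero)
  next
    case (Suc i')
    have "fold (\<lambda>l q. Eop n (fst l) (snd l) q) r (Eop n a b v) = 0"
      by (rule Cons.IH[OF I' Cons.prems(2), of i']) (use Cons.prems(3,4) Suc l in auto)
    then show ?thesis using l by simp
  qed
qed

definition vac :: vec where "vac = Poly_Mapping.single (0, {}) 1"

lemma Inv_vac: "Inv g 0 vac"
  by (simp add: vac_def Inv_def dg_def cntE_def cntS_def split: sym.splits)

lemma irregular_kill: "irregular w \<Longrightarrow> Ew n w vac = 0"
proof -
  assume "irregular w"
  then obtain i g where i: "i < length (rev w)" and g: "virtual g"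
    and c: "length (filter (\<lambda>l. snd l = g) (take (Suc i) (rev w))) > length (filter (\<lambda>l. fst l = g) (take i (rev w)))"
    by (auto simp: irregular_def Let_def)
  have "fold (\<lambda>l q. Eop n (fst l) (snd l) q) (rev w) vac = 0"
    by (rule fold_kill[OF Inv_vac g i]) (use c in simp)
  then show ?thesis by (simp add: Ew_def foldr_conv_fold)
qed

lemma Irr_Act: "x \<in> Irr n \<Longrightarrow> Act n x vac = 0"
proof (induction x rule: Irr.induct)
  case (rels x) then show ?case by (rule Jid_Act)
next
  case (gen w u) then show ?case by (simp add: Act_fmul irregular_kill islin_zero)
next
  case zero then show ?case by simp
next
  case (add x y) then show ?case by (simp add: Act_add)
qed

section \<open>Evaluation to C[M_{n,n}]\<close>

definition pf :: "nat \<times> nat \<Rightarrow> sym \<times> nat" where "pf x = (Prop (fst x), snd x)"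

lemma inj_pf: "inj pf" by (auto simp: inj_def pf_def)

lemma lookup_map_key_pf: "Poly_Mapping.lookup (Poly_Mapping.map_key pf E) x = Poly_Mapping.lookup E (pf x)"
  using inj_pf by (simp add: Poly_Mapping.map_key.rep_eq)

lemma map_key_pf_single: "Poly_Mapping.map_key pf (Poly_Mapping.single (Prop i, k) c) = Poly_Mapping.single (i, k) c"
  using map_key_single[OF inj_pf, of "(i,k)" c] by (simp add: pf_def)

lemma map_key_pf_add: "Poly_Mapping.map_key pf (E + F) = Poly_Mapping.map_key pf E + Poly_Mapping.map_key pf F"
  by (rule poly_mapping_eqI) (simp add: lookup_map_key_pf lookup_add)

lemma map_key_pf_diff: "Poly_Mapping.map_key pf ((E::(sym\<times>nat)\<Rightarrow>\<^sub>0nat) - F) = Poly_Mapping.map_key pf E - Poly_Mapping.map_key pf F"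
  by (rule poly_mapping_eqI) (simp add: lookup_map_key_pf lookup_minus)

definition evb :: "mono \<Rightarrow> cpoly" where
  "evb m = Poly_Mapping.single (Poly_Mapping.map_key pf (fst m)) 1"

definition ev :: "vec \<Rightarrow> cpoly" where "ev = lin evb"

lemma islin_ev [simp]: "islin ev" by (simp add: ev_def)

definition pmono :: "mono \<Rightarrow> bool" where
  "pmono m \<longleftrightarrow> snd m = {} \<and> (\<forall>x\<in>Poly_Mapping.keys (fst m). \<exists>i k. x = (Prop i, k))"

definition PS :: "vec \<Rightarrow> bool" where
  "PS v \<longleftrightarrow> (\<forall>m\<in>Poly_Mapping.keys v. pmono m)"

definition Dlb :: "nat \<Rightarrow> nat \<Rightarrow> nat \<Rightarrow> ((nat \<times> nat) \<Rightarrow>\<^sub>0 nat) \<Rightarrow> cpoly" where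
  "Dlb n i j m = (\<Sum>k\<in>{1..n}. Poly_Mapping.single (m - Poly_Mapping.single (j, k) 1 + Poly_Mapping.single (i, k) 1)
        (of_nat (Poly_Mapping.lookup m (j, k))))"

lemma Dl_lin: "Dl n i j p = lin (Dlb n i j) p"
  by (simp add: Dl_def lin_def Dlb_def sc_sum)

lemma var_mult_lin: "var i j * p = lin (\<lambda>m. Poly_Mapping.single (Poly_Mapping.single (i, j) 1 + m) 1) p"
proof -
  have "var i j * p = var i j * lin (\<lambda>m. Poly_Mapping.single m 1) p" by (simp add: lin_id)
  also have "\<dots> = lin (\<lambda>m. Poly_Mapping.single (Poly_Mapping.single (i, j) 1 + m) 1) p"
    by (simp add: lin_def sum_distrib_left var_def mult_single)
  finally show ?thesis .
qed

lemma islin_rho [simp]: "islin (rho n i j)"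
proof -
  have "rho n i j = (\<lambda>p. lin (Dlb n i j) p + lin (\<lambda>m. Poly_Mapping.single (Poly_Mapping.single (i, j) 1 + m) 1) p)"
    by (simp add: rho_def[abs_def] Dl_lin var_mult_lin)
  then show ?thesis by (simp add: islin_add)
qed

lemma PS_add: "PS v \<Longrightarrow> PS w \<Longrightarrow> PS (v + w)"
  using keys_add[of v w] unfolding PS_def by blast
lemma PS_zero [simp]: "PS 0" by (simp add: PS_def)
lemma PS_sum: "(\<And>k. k \<in> K \<Longrightarrow> PS (f k)) \<Longrightarrow> PS (sum f K)"
  by (induction K rule: infinite_finite_induct) (auto intro: PS_add)
lemma PS_single: "pmono m \<Longrightarrow> PS (Poly_Mapping.single m c)"
  by (simp add: PS_def)
lemma PS_lin: "(\<And>m. m \<in> Poly_Mapping.keys v \<Longrightarrow> PS (F m)) \<Longrightarrow> PS (lin F v)"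
  using keys_lin[of F v] unfolding PS_def by blast

lemma islin_as_lin: "islin f \<Longrightarrow> f v = lin (\<lambda>m. f (Poly_Mapping.single m 1)) v"
  using islin_lin_comm[of f "\<lambda>m. Poly_Mapping.single m 1" v] by (simp add: lin_id)

lemma Eop_prop_basis:
  assumes m: "m = (E, {})" and j: "j \<in> {1..n}"
  shows "Eop n (Prop i) (Prop j) (Poly_Mapping.single m 1) =
     (\<Sum>k\<in>{1..n}. Poly_Mapping.single (E - Poly_Mapping.single (Prop j, k) 1 + Poly_Mapping.single (Prop i, k) 1, {})
        (of_nat (Poly_Mapping.lookup E (Prop j, k)))) +
     Poly_Mapping.single (E + Poly_Mapping.single (Prop i, j) 1, {}) 1"
  using j by (simp add: Eop_def Dop_def Mop_def mulv_def derv_def mulb_def derb_def mulEb_def derEb_def m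
      del: atLeastAtMost_iff)

lemma pmono_sub: "pmono (E, {}) \<Longrightarrow> pmono (E - Poly_Mapping.single (Prop j, k) 1 + Poly_Mapping.single (Prop i, k') 1, {})"
  unfolding pmono_def
proof (clarsimp)
  fix a b assume h: "\<forall>x\<in>Poly_Mapping.keys E. \<exists>i k. x = (Prop i, k)"
    and ab: "(a, b) \<in> Poly_Mapping.keys (E - Poly_Mapping.single (Prop j, k) (Suc 0) + Poly_Mapping.single (Prop i, k') (Suc 0))"
  then have "(a, b) \<in> Poly_Mapping.keys E \<or> (a, b) = (Prop i, k')"
    by (auto simp: in_keys_iff lookup_add lookup_minus lookup_single when_def split: if_splits)
  then show "\<exists>i. a = Prop i" using h by auto
qed

lemma pmono_add: "pmono (E, {}) \<Longrightarrow> pmono (E + Poly_Mapping.single (Prop i, k') 1, {})"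
  unfolding pmono_def
proof (clarsimp)
  fix a b assume h: "\<forall>x\<in>Poly_Mapping.keys E. \<exists>i k. x = (Prop i, k)"
    and ab: "(a, b) \<in> Poly_Mapping.keys (E + Poly_Mapping.single (Prop i, k') (Suc 0))"
  then have "(a, b) \<in> Poly_Mapping.keys E \<or> (a, b) = (Prop i, k')"
    by (auto simp: in_keys_iff lookup_add lookup_single when_def split: if_splits)
  then show "\<exists>i. a = Prop i" using h by auto
qed

lemma Eop_prop:
  assumes P: "PS v" and j: "j \<in> {1..n}"
  shows "PS (Eop n (Prop i) (Prop j) v) \<and> ev (Eop n (Prop i) (Prop j) v) = rho n i j (ev v)"
proof
  have e: "Eop n (Prop i) (Prop j) v = lin (\<lambda>m. Eop n (Prop i) (Prop j) (Poly_Mapping.single m 1)) v"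
    by (rule islin_as_lin) simp
  show "PS (Eop n (Prop i) (Prop j) v)"
    unfolding e
  proof (rule PS_lin)
    fix m assume "m \<in> Poly_Mapping.keys v"
    then have pm: "pmono m" using P by (simp add: PS_def)
    then obtain E where m: "m = (E, {})" by (cases m) (auto simp: pmono_def)
    show "PS (Eop n (Prop i) (Prop j) (Poly_Mapping.single m 1))"
      unfolding Eop_prop_basis[OF m j]
      using pm m by (intro PS_add PS_sum PS_single pmono_sub pmono_add) auto
  qed
  show "ev (Eop n (Prop i) (Prop j) v) = rho n i j (ev v)"
  proof (rule islin_ext[of "\<lambda>v. ev (Eop n (Prop i) (Prop j) v)" "\<lambda>v. rho n i j (ev v)"])
    show "islin (\<lambda>v. ev (Eop n (Prop i) (Prop j) v))" by (rule islin_comp2) simp_all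
    show "islin (\<lambda>v. rho n i j (ev v))" by (rule islin_comp2) simp_all
  next
    fix m assume "m \<in> Poly_Mapping.keys v"
    then have pm: "pmono m" using P by (simp add: PS_def)
    then obtain E where m: "m = (E, {})" by (cases m) (auto simp: pmono_def)
    show "ev (Eop n (Prop i) (Prop j) (Poly_Mapping.single m 1)) = rho n i j (ev (Poly_Mapping.single m 1))"
      unfolding Eop_prop_basis[OF m j]
      by (simp add: ev_def evb_def m rho_def Dl_lin var_mult_lin Dlb_def lin_sum lin_add
          map_key_pf_diff map_key_pf_add map_key_pf_single lookup_map_key_pf pf_def var_def add.commute mult_single
          del: atLeastAtMost_iff)
  qed
qed

lemma map_key_pf_zero: "Poly_Mapping.map_key pf 0 = 0"
  by (rule poly_mapping_eqI) (simp add: lookup_map_key_pf)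

lemma PS_vac: "PS vac" by (simp add: PS_def vac_def pmono_def)
lemma ev_vac: "ev vac = 1" by (simp add: ev_def evb_def vac_def map_key_pf_zero)

lemma Ew_proper: "proper_word n w \<Longrightarrow> PS (Ew n w vac) \<and> ev (Ew n w vac) = rho_word n w 1"
proof (induction w)
  case Nil then show ?case by (simp add: PS_vac ev_vac rho_word_def)
next
  case (Cons l w)
  then obtain i j where l: "l = (Prop i, Prop j)" and ij: "i \<in> {1..n}" "j \<in> {1..n}"
    and pw: "proper_word n w"
    by (auto simp: proper_word_def)
  from Cons.IH[OF pw] have IH: "PS (Ew n w vac)" "ev (Ew n w vac) = rho_word n w 1" by auto
  show ?case using Eop_prop[OF IH(1) ij(2), of i] IH(2) l
    by (simp add: rho_word_def)
qed

lemma const_mult: "const c * p = sc c p"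
  by (simp add: const_def sc_def mult_map_scale_conv_mult)

lemma koszul_ev: "proper n x \<Longrightarrow> koszul n x = ev (Act n x vac)"
proof -
  assume p: "proper n x"
  have "ev (Act n x vac) = lin (\<lambda>w. ev (Ew n w vac)) x"
    unfolding Act_def by (rule islin_lin_comm) simp
  also have "\<dots> = lin (\<lambda>w. rho_word n w 1) x"
    by (rule lin_cong) (use p Ew_proper in \<open>auto simp: proper_def\<close>)
  also have "\<dots> = koszul n x"
    by (simp add: lin_def koszul_def const_mult)
  finally show ?thesis by simp
qed

section \<open>The Capelli word\<close>

definition NP :: "vec \<Rightarrow> bool" where
  "NP v \<longleftrightarrow> (\<forall>m\<in>Poly_Mapping.keys v. \<forall>i k. Poly_Mapping.lookup (fst m) (Prop i, k) = 0)"

lemma NP_vac: "NP vac" by (simp add: NP_def vac_def)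

lemma NP_mulv_alpha: "NP v \<Longrightarrow> NP (mulv (Alpha a, k) v)"
  unfolding mulv_def NP_def
  using keys_lin[of "mulb (Alpha a, k)" v]
  by (fastforce simp: mulb_def mulOb_def split: if_splits)

lemma derv_prop_NP: "NP v \<Longrightarrow> derv (Prop j, k) v = 0"
  unfolding derv_def
  by (rule lin_zero_fun) (auto simp: NP_def derb_def derEb_def)

fun Cw :: "(nat \<Rightarrow> nat) \<Rightarrow> (nat \<Rightarrow> nat) \<Rightarrow> nat list \<Rightarrow> vec \<Rightarrow> vec" where
  "Cw \<alpha> j [] v = v"
| "Cw \<alpha> j (t # ts) v = mulv (Alpha (\<alpha> t), j t) (Cw \<alpha> j ts v)"

lemma NP_Cw: "NP v \<Longrightarrow> NP (Cw \<alpha> j ts v)"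
  by (induction ts) (simp_all add: NP_mulv_alpha)

lemma Ew_cre:
  assumes "NP v" "\<forall>t\<in>set ts. j t \<in> {1..n}"
  shows "Ew n (map (\<lambda>t. (Alpha (\<alpha> t), Prop (j t))) ts) v = Cw \<alpha> j ts v"
  using assms
proof (induction ts)
  case Nil then show ?case by simp
next
  case (Cons t ts)
  then have IH: "Ew n (map (\<lambda>t. (Alpha (\<alpha> t), Prop (j t))) ts) v = Cw \<alpha> j ts v" by simp
  have np: "NP (Cw \<alpha> j ts v)" by (rule NP_Cw[OF Cons.prems(1)])
  have jt: "j t \<in> {1..n}" using Cons.prems(2) by simp
  show ?case
    using jt by (simp add: IH Eop_def Dop_def Mop_def derv_prop_NP[OF np] islin_zero[OF islin_mulv] del: atLeastAtMost_iff)
qed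

definition Aop :: "nat \<Rightarrow> nat \<Rightarrow> nat \<Rightarrow> vec \<Rightarrow> vec" where
  "Aop n i a v = (\<Sum>k\<in>{1..n}. mulv (Prop i, k) (derv (Alpha a, k) v))"

lemma islin_Aop [simp]: "islin (Aop n i a)"
  unfolding Aop_def by (rule islin_sumf, rule islin_comp2) simp_all

lemma Eop_ann: "Eop n (Prop i) (Alpha a) v = Aop n i a v"
  by (simp add: Eop_def Dop_def Mop_def Aop_def)

lemma Aop_c:
  assumes jb: "jb \<in> {1..n}"
  shows "Aop n i a (mulv (Alpha b, jb) v) = (if a = b then mulv (Prop i, jb) v else 0) - mulv (Alpha b, jb) (Aop n i a v)"
proof -
  have pt: "mulv (Prop i, k) (derv (Alpha a, k) (mulv (Alpha b, jb) v)) =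
      (if a = b \<and> k = jb then mulv (Prop i, k) v else 0) - mulv (Alpha b, jb) (mulv (Prop i, k) (derv (Alpha a, k) v))" for k
  proof -
    have g3: "derv (Alpha a, k) (mulv (Alpha b, jb) v) = (if a = b \<and> k = jb then v else 0) - mulv (Alpha b, jb) (derv (Alpha a, k) v)"
      using G3[of "(Alpha a, k)" "(Alpha b, jb)" v] by (simp add: sig_def sc_m1)
    have g1: "mulv (Prop i, k) (mulv (Alpha b, jb) Z) = mulv (Alpha b, jb) (mulv (Prop i, k) Z)" for Z
      using G1[of "(Prop i, k)" "(Alpha b, jb)" Z] by (simp add: sig_def)
    show ?thesis by (simp add: g3 g1 islin_diff[OF islin_mulv] lin_if0)
  qed
  have "Aop n i a (mulv (Alpha b, jb) v) = (\<Sum>k\<in>{1..n}. (if a = b \<and> k = jb then mulv (Prop i, k) v else 0)) - (\<Sum>k\<in>{1..n}. mulv (Alpha b, jb) (mulv (Prop i, k) (derv (Alpha a, k) v)))"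
    by (simp add: Aop_def pt sum_subtractf)
  also have "(\<Sum>k\<in>{1..n}. (if a = b \<and> k = jb then mulv (Prop i, k) v else 0)) = (if a = b then mulv (Prop i, jb) v else 0)"
    using jb by (cases "a = b") (simp_all add: sum.delta del: atLeastAtMost_iff)
  also have "(\<Sum>k\<in>{1..n}. mulv (Alpha b, jb) (mulv (Prop i, k) (derv (Alpha a, k) v))) = mulv (Alpha b, jb) (Aop n i a v)"
    by (simp only: Aop_def islin_sum[OF islin_mulv])
  finally show ?thesis .
qed

lemma Aop_m: "Aop n i a (mulv (Prop i', j') v) = mulv (Prop i', j') (Aop n i a v)"
proof -
  have pt: "mulv (Prop i, k) (derv (Alpha a, k) (mulv (Prop i', j') v)) = mulv (Prop i', j') (mulv (Prop i, k) (derv (Alpha a, k) v))" for k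
  proof -
    have g3: "derv (Alpha a, k) (mulv (Prop i', j') v) = mulv (Prop i', j') (derv (Alpha a, k) v)"
      using G3[of "(Alpha a, k)" "(Prop i', j')" v] by (simp add: sig_def)
    have g1: "mulv (Prop i, k) (mulv (Prop i', j') Z) = mulv (Prop i', j') (mulv (Prop i, k) Z)" for Z
      using G1[of "(Prop i, k)" "(Prop i', j')" Z] by (simp add: sig_def)
    show ?thesis by (simp add: g3 g1)
  qed
  show ?thesis by (simp add: Aop_def pt islin_sum[OF islin_mulv])
qed

lemma Aop_vac: "Aop n i a vac = 0"
proof -
  have "derv (Alpha a, k) vac = 0" for k
    by (simp add: derv_def derb_def derOb_def vac_def)
  then show ?thesis by (simp add: Aop_def islin_zero)
qed

lemma Aop_Cw:
  assumes "\<forall>s\<in>set ts. \<alpha> s \<noteq> a \<and> j s \<in> {1..n}"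
  shows "Aop n i a (Cw \<alpha> j ts v) = sc ((-1) ^ length ts) (Cw \<alpha> j ts (Aop n i a v))"
  using assms
proof (induction ts)
  case Nil then show ?case by simp
next
  case (Cons s ts)
  then have IH: "Aop n i a (Cw \<alpha> j ts v) = sc ((-1) ^ length ts) (Cw \<alpha> j ts (Aop n i a v))"
    and ne: "\<alpha> s \<noteq> a" and js: "j s \<in> {1..n}" by auto
  show ?case
    using ne by (simp add: Aop_c[OF js] IH islinD[OF islin_mulv] sc_m1[symmetric])
qed

lemma Cw_m: "Cw \<alpha> j ts (mulv (Prop i', j') v) = mulv (Prop i', j') (Cw \<alpha> j ts v)"
proof (induction ts)
  case Nil then show ?case by simp
next
  case (Cons t ts)
  have g1: "mulv (Alpha (\<alpha> t), j t) (mulv (Prop i', j') Z) = mulv (Prop i', j') (mulv (Alpha (\<alpha> t), j t) Z)" for Z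
    using G1[of "(Alpha (\<alpha> t), j t)" "(Prop i', j')" Z] by (simp add: sig_def)
  show ?case by (simp add: Cons g1)
qed

lemma Cw_append: "Cw \<alpha> j (ts @ us) v = Cw \<alpha> j ts (Cw \<alpha> j us v)"
  by (induction ts) simp_all

lemma Ew_ann_m: "Ew n (map (\<lambda>t. (Prop (i t), Alpha (\<alpha> t))) ts) (mulv (Prop i', j') v) = mulv (Prop i', j') (Ew n (map (\<lambda>t. (Prop (i t), Alpha (\<alpha> t))) ts) v)"
  by (induction ts) (simp_all add: Eop_ann Aop_m)

fun Pm :: "(nat \<Rightarrow> nat) \<Rightarrow> (nat \<Rightarrow> nat) \<Rightarrow> nat \<Rightarrow> vec" where
  "Pm i j 0 = vac"
| "Pm i j (Suc h) = mulv (Prop (i (Suc h)), j (Suc h)) (Pm i j h)"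

lemma choose2_Suc: "(Suc h choose 2) = h + (h choose 2)"
  by (simp add: numeral_2_eq_2)

lemma capelli_calc:
  assumes "\<forall>t\<in>{1..h}. i t \<in> {1..n} \<and> j t \<in> {1..n}" and "inj_on \<alpha> {1..h}"
  shows "Ew n (map (\<lambda>t. (Prop (i t), Alpha (\<alpha> t))) [1..<h+1]) (Cw \<alpha> j [1..<h+1] vac) = sc ((-1) ^ (h choose 2)) (Pm i j h)"
  using assms
proof (induction h)
  case 0 then show ?case by (simp add: numeral_2_eq_2)
next
  case (Suc h)
  let ?ts = "[1..<h+1]"
  let ?A = "map (\<lambda>t. (Prop (i t), Alpha (\<alpha> t))) ?ts"
  have IH: "Ew n ?A (Cw \<alpha> j ?ts vac) = sc ((-1) ^ (h choose 2)) (Pm i j h)"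
    by (rule Suc.IH) (use Suc.prems in \<open>auto simp: inj_on_def\<close>)
  have up: "[1..<Suc h + 1] = ?ts @ [Suc h]" by simp
  have jh: "j (Suc h) \<in> {1..n}" using Suc.prems(1) by simp
  have ne: "\<forall>s\<in>set ?ts. \<alpha> s \<noteq> \<alpha> (Suc h) \<and> j s \<in> {1..n}"
  proof
    fix s assume s: "s \<in> set ?ts"
    then have "s \<in> {1..Suc h}" "Suc h \<in> {1..Suc h}" "s \<noteq> Suc h" by auto
    then show "\<alpha> s \<noteq> \<alpha> (Suc h) \<and> j s \<in> {1..n}"
      using Suc.prems by (auto simp: inj_on_def)
  qed
  let ?m = "mulv (Prop (i (Suc h)), j (Suc h))"
  have a1: "Aop n (i (Suc h)) (\<alpha> (Suc h)) (mulv (Alpha (\<alpha> (Suc h)), j (Suc h)) vac) = ?m vac"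
    by (simp add: Aop_c[OF jh] Aop_vac islin_zero)
  have "Ew n (map (\<lambda>t. (Prop (i t), Alpha (\<alpha> t))) [1..<Suc h + 1]) (Cw \<alpha> j [1..<Suc h + 1] vac)
      = Ew n ?A (Aop n (i (Suc h)) (\<alpha> (Suc h)) (Cw \<alpha> j ?ts (mulv (Alpha (\<alpha> (Suc h)), j (Suc h)) vac)))"
    unfolding up by (simp del: upt_Suc add: Ew_append Cw_append Eop_ann)
  also have "\<dots> = Ew n ?A (sc ((-1) ^ h) (Cw \<alpha> j ?ts (?m vac)))"
    by (simp only: Aop_Cw[OF ne] a1 length_upt) simp
  also have "\<dots> = sc ((-1) ^ h) (?m (Ew n ?A (Cw \<alpha> j ?ts vac)))"
    by (simp del: upt_Suc add: islinD[OF islin_Ew] Cw_m Ew_ann_m)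
  also have "\<dots> = sc ((-1) ^ (Suc h choose 2)) (Pm i j (Suc h))"
    using IH by (simp del: upt_Suc add: islinD[OF islin_mulv] choose2_Suc power_add)
  finally show ?case .
qed

lemma mulv_prop:
  assumes P: "PS v"
  shows "PS (mulv (Prop i, j) v) \<and> ev (mulv (Prop i, j) v) = var i j * ev v"
proof
  have e: "mulv (Prop i, j) v = lin (\<lambda>m. mulv (Prop i, j) (Poly_Mapping.single m 1)) v"
    by (rule islin_as_lin) simp
  show "PS (mulv (Prop i, j) v)"
    unfolding e
  proof (rule PS_lin)
    fix m assume "m \<in> Poly_Mapping.keys v"
    then have pm: "pmono m" using P by (simp add: PS_def)
    then obtain E where m: "m = (E, {})" by (cases m) (auto simp: pmono_def)
    show "PS (mulv (Prop i, j) (Poly_Mapping.single m 1))"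
      using pm m pmono_add[of E i j] by (simp add: mulv_def mulb_def mulEb_def PS_single)
  qed
  show "ev (mulv (Prop i, j) v) = var i j * ev v"
  proof (rule islin_ext[of "\<lambda>v. ev (mulv (Prop i, j) v)" "\<lambda>v. var i j * ev v"])
    show "islin (\<lambda>v. ev (mulv (Prop i, j) v))" by (rule islin_comp2) simp_all
    have "islin (\<lambda>p. var i j * p)" by (simp add: islin_def var_mult_lin lin_add lin_sc)
    then show "islin (\<lambda>v. var i j * ev v)" by (rule islin_comp2) simp
  next
    fix m assume "m \<in> Poly_Mapping.keys v"
    then have pm: "pmono m" using P by (simp add: PS_def)
    then obtain E where m: "m = (E, {})" by (cases m) (auto simp: pmono_def)
    show "ev (mulv (Prop i, j) (Poly_Mapping.single m 1)) = var i j * ev (Poly_Mapping.single m 1)"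
      by (simp add: ev_def evb_def m mulv_def mulb_def mulEb_def map_key_pf_add map_key_pf_single var_def mult_single add.commute)
  qed
qed

lemma Pm_ev: "PS (Pm i j h) \<and> ev (Pm i j h) = (\<Prod>t\<in>{1..h}. var (i t) (j t))"
proof (induction h)
  case 0 then show ?case by (simp add: PS_vac ev_vac)
next
  case (Suc h)
  then show ?case using mulv_prop[of "Pm i j h" "i (Suc h)" "j (Suc h)"]
    by (simp add: prod.cl_ivl_Suc mult.commute)
qed

section \<open>Existence of the projection\<close>

lemma fmul_single_left: "fmul (Poly_Mapping.single A 1) y = lin (\<lambda>v. Poly_Mapping.single (A @ v) 1) y"
  by (simp add: fmul_def lin_def)

lemma fmul_single_right: "fmul y (Poly_Mapping.single B 1) = lin (\<lambda>u. Poly_Mapping.single (u @ B) 1) y"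
  by (simp add: fmul_def lin_def)

lemma fmul_single_single: "fmul (Poly_Mapping.single u a) (Poly_Mapping.single v b) = Poly_Mapping.single (u @ v) (a * b)"
  by (simp add: fmul_def)

lemma fmul_fscal_left: "fmul (fscal c) y = sc c y"
proof -
  have "fmul (fscal c) y = (\<Sum>v\<in>Poly_Mapping.keys y. Poly_Mapping.single v (c * Poly_Mapping.lookup y v))"
    by (cases "c = 0") (simp_all add: fmul_def fscal_def)
  also have "\<dots> = sc c (lin (\<lambda>m. Poly_Mapping.single m 1) y)"
    by (simp add: lin_def sc_sum)
  finally show ?thesis by (simp add: lin_id)
qed

lemma fmul_fscal_right: "fmul y (fscal 1) = y"
proof -
  have "fmul y (fscal 1) = lin (\<lambda>m. Poly_Mapping.single m 1) y"
    by (simp add: fmul_def fscal_def lin_def)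
  then show ?thesis by (simp add: lin_id)
qed

lemma fmul_sc_left: "fmul (sc c u) y = sc c (fmul u y)"
proof -
  have k: "Poly_Mapping.keys (sc c u) \<subseteq> Poly_Mapping.keys u" by (auto simp: in_keys_iff)
  have "fmul (sc c u) y = (\<Sum>a\<in>Poly_Mapping.keys u. \<Sum>v\<in>Poly_Mapping.keys y. Poly_Mapping.single (a @ v) (Poly_Mapping.lookup (sc c u) a * Poly_Mapping.lookup y v))"
    unfolding fmul_def by (rule sum.mono_neutral_left) (use k in \<open>auto simp: in_keys_iff\<close>)
  then show ?thesis by (simp add: fmul_def sc_sum mult.assoc)
qed

lemma valid_el_single: "valid_word n w \<Longrightarrow> valid_el n (Poly_Mapping.single w c)"
  by (simp add: valid_el_def)

lemma valid_el_fscal: "valid_el n (fscal c)"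
  by (simp add: valid_el_def fscal_def valid_word_def)

lemma valid_el_sc: "valid_el n u \<Longrightarrow> valid_el n (sc c u)"
  by (auto simp: valid_el_def in_keys_iff)

lemma Jid_sc: "x \<in> Jid n \<Longrightarrow> sc c x \<in> Jid n"
  using Jid.mult[of x n "fscal c" "fscal 1"] valid_el_fscal
  by (simp add: fmul_fscal_left fmul_fscal_right)

lemma Irr_sc: "x \<in> Irr n \<Longrightarrow> sc c x \<in> Irr n"
proof (induction x rule: Irr.induct)
  case (rels x) then show ?case by (simp add: Jid_sc Irr.rels)
next
  case (gen w u)
  then show ?case using Irr.gen[of n w "sc c u"] by (simp add: fmul_sc_left valid_el_sc)
next
  case zero then show ?case by (simp add: Irr.zero)
next
  case (add x y) then show ?case by (simp add: sc_add Irr.add)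
qed

lemma Irr_diff: "x \<in> Irr n \<Longrightarrow> y \<in> Irr n \<Longrightarrow> x - y \<in> Irr n"
  using Irr.add[of x n "sc (-1) y"] Irr_sc[of y n "-1"] by (simp add: sc_m1)

lemma Irr_irregular: "valid_word n w \<Longrightarrow> irregular w \<Longrightarrow> Poly_Mapping.single w 1 \<in> Irr n"
  using Irr.gen[of n w "fscal 1"] valid_el_fscal by (simp add: fscal_def fmul_single_single)

lemma proper_add: "proper n x \<Longrightarrow> proper n y \<Longrightarrow> proper n (x + y)"
  using keys_add[of x y] unfolding proper_def by blast
lemma proper_sc: "proper n x \<Longrightarrow> proper n (sc c x)"
  by (auto simp: proper_def in_keys_iff)
lemma proper_zero: "proper n 0" by (simp add: proper_def)
lemma proper_diff: "proper n x \<Longrightarrow> proper n y \<Longrightarrow> proper n (x - y)"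
  using proper_add[of n x "sc (-1) y"] proper_sc[of n y "-1"] by (simp add: sc_m1)
lemma proper_single: "proper_word n w \<Longrightarrow> proper n (Poly_Mapping.single w c)"
  by (simp add: proper_def)

lemma rel_explicit: "rel a b c d = Poly_Mapping.single [(a,b),(c,d)] 1 - Poly_Mapping.single [(c,d),(a,b)] (sgn a b c d)
   - ((if b = c then Poly_Mapping.single [(a,d)] 1 else 0) - (if a = d then Poly_Mapping.single [(c,b)] (sgn a b c d) else 0))"
  by (simp add: rel_def e_def fmul_single_single fmul_fscal_left)

definition wrap :: "letter list \<Rightarrow> letter list \<Rightarrow> fa \<Rightarrow> fa" where
  "wrap A B x = lin (\<lambda>v. Poly_Mapping.single (A @ v) 1) (lin (\<lambda>u. Poly_Mapping.single (u @ B) 1) x)"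

lemma wrap_Jid: "x \<in> Jid n \<Longrightarrow> valid_word n A \<Longrightarrow> valid_word n B \<Longrightarrow> wrap A B x \<in> Jid n"
  using Jid.mult[of x n "Poly_Mapping.single A 1" "Poly_Mapping.single B 1"]
  by (simp add: valid_el_single fmul_single_left fmul_single_right wrap_def)

lemma wrap_rel: "wrap A B (rel a b c d) = Poly_Mapping.single (A @ [(a,b),(c,d)] @ B) 1 - sc (sgn a b c d) (Poly_Mapping.single (A @ [(c,d),(a,b)] @ B) 1)
   - ((if b = c then Poly_Mapping.single (A @ [(a,d)] @ B) 1 else 0) - sc (sgn a b c d) (if a = d then Poly_Mapping.single (A @ [(c,b)] @ B) 1 else 0))"
  by (simp add: wrap_def rel_explicit lin_diff lin_if0[OF islin_lin] if_distrib[of "sc _"])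

definition nvl :: "letter list \<Rightarrow> nat" where "nvl w = length (filter (\<lambda>l. virtual (fst l)) w)"
definition npl :: "letter list \<Rightarrow> nat" where "npl w = length (filter (\<lambda>l. \<not> virtual (fst l)) w)"

fun inv :: "letter list \<Rightarrow> nat" where
  "inv [] = 0"
| "inv (l # w) = (if virtual (fst l) then 0 else nvl w) + inv w"

lemma inv_append: "inv (A @ B) = inv A + inv B + npl A * nvl B"
  by (induction A) (auto simp: nvl_def npl_def algebra_simps)

lemma inv_swap: "\<not> virtual (fst m) \<Longrightarrow> virtual (fst l) \<Longrightarrow> inv (A @ [m, l] @ B) = Suc (inv (A @ [l, m] @ B))"
  by (simp add: inv_append nvl_def npl_def)

lemma inv_pos: "inv w > 0 \<Longrightarrow> \<exists>A m l B. w = A @ [m, l] @ B \<and> \<not> virtual (fst m) \<and> virtual (fst l)"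
proof (induction w)
  case Nil then show ?case by simp
next
  case (Cons x w)
  show ?case
  proof (cases "inv w > 0")
    case True
    then obtain A m l B where "w = A @ [m, l] @ B \<and> \<not> virtual (fst m) \<and> virtual (fst l)" using Cons.IH by blast
    then show ?thesis by (metis append_Cons)
  next
    case False
    then have nx: "\<not> virtual (fst x)" and nv: "nvl w > 0" using Cons.prems by (auto split: if_splits)
    then obtain y w' where w: "w = y # w'" by (cases w) (auto simp: nvl_def)
    show ?thesis
    proof (cases "virtual (fst y)")
      case True
      then show ?thesis using nx w by (metis append_Nil append_Cons)
    next
      case False
      then have "nvl w' > 0" using nv w by (simp add: nvl_def)
      then have "inv w > 0" using w False by simp
      then show ?thesis using \<open>\<not> inv w > 0\<close> by simp
    qed
  qed
qed

lemma inv_zero_hd: "inv (x # w) = 0 \<Longrightarrow> \<not> virtual (fst x) \<Longrightarrow> nvl w = 0"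
  by (simp split: if_splits)

definition ca :: "sym \<Rightarrow> letter list \<Rightarrow> nat" where "ca g w = length (filter (\<lambda>l. fst l = g) w)"
definition cb :: "sym \<Rightarrow> letter list \<Rightarrow> nat" where "cb g w = length (filter (\<lambda>l. snd l = g) w)"
definition bal :: "letter list \<Rightarrow> bool" where "bal w \<longleftrightarrow> (\<forall>g. virtual g \<longrightarrow> ca g w = cb g w)"

lemma bal_replace:
  assumes "bal (A @ X @ B)" "\<And>g. virtual g \<Longrightarrow> ca g Y + cb g X = ca g X + cb g Y"
  shows "bal (A @ Y @ B)"
  unfolding bal_def
proof (intro allI impI)
  fix g assume g: "virtual g"
  have h1: "ca g A + ca g X + ca g B = cb g A + cb g X + cb g B"
    using assms(1) g by (simp add: bal_def ca_def cb_def add.assoc)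
  have h2: "ca g Y + cb g X = ca g X + cb g Y" using assms(2) g by simp
  have "ca g (A @ Y @ B) = ca g A + ca g Y + ca g B" "cb g (A @ Y @ B) = cb g A + cb g Y + cb g B"
    by (simp_all add: ca_def cb_def)
  then show "ca g (A @ Y @ B) = cb g (A @ Y @ B)" using h1 h2 by linarith
qed

lemma valid_word_append: "valid_word n (A @ B) \<longleftrightarrow> valid_word n A \<and> valid_word n B"
  by (auto simp: valid_word_def)

lemma irregular_hd:
  assumes b: "bal (x # w')" and g: "virtual (fst x)"
  shows "irregular (x # w')"
proof -
  let ?g = "fst x"
  let ?r = "rev (x # w')"
  have e1: "take (Suc (length w')) ?r = ?r" by simp
  have e2: "take (length w') ?r = rev w'" by simp
  have "ca ?g (x # w') = cb ?g (x # w')" using b g by (simp add: bal_def)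
  then have "length (filter (\<lambda>l. snd l = ?g) (take (Suc (length w')) ?r)) > length (filter (\<lambda>l. fst l = ?g) (take (length w') ?r))"
    unfolding e1 e2 by (simp add: ca_def cb_def rev_filter[symmetric] split: if_splits)
  then show ?thesis unfolding irregular_def Let_def using g
    by (intro exI[of _ "length w'"] conjI) (auto intro!: exI[of _ ?g])
qed

lemma ex_aux:
  "\<forall>w. length w = N \<longrightarrow> inv w = K \<longrightarrow> valid_word n w \<longrightarrow> bal w \<longrightarrow>
      (\<exists>u. proper n u \<and> Poly_Mapping.single w 1 - u \<in> Irr n)"
proof (induction N arbitrary: K rule: less_induct)
  case (less N)
  note outer = less
  show ?case
  proof (induction K rule: less_induct)
    case (less K)
    note inner = less
    show ?case
    proof (intro allI impI)
      fix w assume len: "length w = N" and iw: "inv w = K" and vw: "valid_word n w" and bw: "bal w"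
      show "\<exists>u. proper n u \<and> Poly_Mapping.single w 1 - u \<in> Irr n"
      proof (cases "K = 0")
        case True
        show ?thesis
        proof (cases "\<exists>l\<in>set w. virtual (fst l)")
          case True
          then obtain x w' where w: "w = x # w'" by (cases w) auto
          have "virtual (fst x)"
          proof (rule ccontr)
            assume nx: "\<not> virtual (fst x)"
            then have "nvl w' = 0" using inv_zero_hd[of x w'] iw \<open>K = 0\<close> w by simp
            then show False using True nx w by (auto simp: nvl_def filter_empty_conv)
          qed
          then have "irregular w" using irregular_hd bw w by simp
          then have "Poly_Mapping.single w 1 \<in> Irr n" by (rule Irr_irregular[OF vw])
          then show ?thesis by (intro exI[of _ 0]) (simp add: proper_zero)
        next
          case False
          have "proper_word n w"
            unfolding proper_word_def
          proof
            fix l assume l: "l \<in> set w"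
            obtain a b where ab: "l = (a, b)" by (cases l)
            have na: "\<not> virtual a" using False l ab by auto
            have nb: "\<not> virtual b"
            proof
              assume vb: "virtual b"
              have "\<forall>l\<in>set w. fst l \<noteq> b" using False vb by auto
              then have "ca b w = 0" by (simp add: ca_def filter_empty_conv)
              moreover have "cb b w \<noteq> 0" using l ab by (force simp: cb_def filter_empty_conv)
              ultimately show False using bw vb by (simp add: bal_def)
            qed
            have va: "valid_sym n a" and vb: "valid_sym n b" using vw l ab by (auto simp: valid_word_def)
            from na va nb vb show "\<exists>i j. l = (Prop i, Prop j) \<and> i \<in> {1..n} \<and> j \<in> {1..n}"
              using ab by (cases a; cases b) auto
          qed
          then show ?thesis using proper_single[of n w 1] Irr.zero by (intro exI[of _ "Poly_Mapping.single w 1"]) simp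
        qed
      next
        case False
        then obtain A m l B where w: "w = A @ [m, l] @ B" and nm: "\<not> virtual (fst m)" and vl: "virtual (fst l)"
          using inv_pos iw by blast
        obtain p q where m: "m = (p, q)" by (cases m)
        obtain c d where l: "l = (c, d)" by (cases l)
        let ?s = "sgn p q c d"
        let ?w1 = "A @ [l, m] @ B"
        let ?x2 = "if q = c then Poly_Mapping.single (A @ [(p,d)] @ B) 1 else 0"
        let ?x3 = "if p = d then Poly_Mapping.single (A @ [(c,q)] @ B) 1 else 0"
        have vA: "valid_word n A" and vB: "valid_word n B" and vm: "valid_sym n p" "valid_sym n q"
          and vl': "valid_sym n c" "valid_sym n d"
          using vw by (auto simp: w valid_word_def m l)
        have J: "wrap A B (rel p q c d) \<in> Jid n"
          by (rule wrap_Jid[OF Jid.gen[OF vm vl'] vA vB])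
        have Jeq: "wrap A B (rel p q c d) = Poly_Mapping.single w 1 - sc ?s (Poly_Mapping.single ?w1 1) - (?x2 - sc ?s ?x3)"
          by (simp add: wrap_rel w m l)
        have "\<exists>u1. proper n u1 \<and> Poly_Mapping.single ?w1 1 - u1 \<in> Irr n"
        proof -
          have "inv ?w1 < K" using inv_swap[OF nm vl, of A B] iw w by simp
          moreover have "length ?w1 = N" using len w by simp
          moreover have "valid_word n ?w1" using vw w by (auto simp: valid_word_def)
          moreover have "bal ?w1" by (rule bal_replace[of A "[m, l]" B]) (use bw w in \<open>auto simp: ca_def cb_def\<close>)
          ultimately show ?thesis using inner by blast
        qed
        then obtain u1 where u1: "proper n u1" "Poly_Mapping.single ?w1 1 - u1 \<in> Irr n" by blast
        have "\<exists>u2. proper n u2 \<and> ?x2 - u2 \<in> Irr n"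
        proof (cases "q = c")
          case True
          let ?w2 = "A @ [(p,d)] @ B"
          have "length ?w2 < N" using len w by simp
          moreover have "valid_word n ?w2" using vA vB vm vl' by (auto simp: valid_word_def)
          moreover have "bal ?w2" by (rule bal_replace[of A "[m, l]" B]) (use bw w True m l in \<open>auto simp: ca_def cb_def\<close>)
          ultimately have "\<exists>u. proper n u \<and> Poly_Mapping.single ?w2 1 - u \<in> Irr n" using outer by blast
          then show ?thesis using True by simp
        next
          case False then show ?thesis by (intro exI[of _ 0]) (simp add: proper_zero Irr.zero)
        qed
        then obtain u2 where u2: "proper n u2" "?x2 - u2 \<in> Irr n" by blast
        have "\<exists>u3. proper n u3 \<and> ?x3 - u3 \<in> Irr n"
        proof (cases "p = d")
          case True
          let ?w3 = "A @ [(c,q)] @ B"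
          have "length ?w3 < N" using len w by simp
          moreover have "valid_word n ?w3" using vA vB vm vl' by (auto simp: valid_word_def)
          moreover have "bal ?w3" by (rule bal_replace[of A "[m, l]" B]) (use bw w True m l in \<open>auto simp: ca_def cb_def\<close>)
          ultimately have "\<exists>u. proper n u \<and> Poly_Mapping.single ?w3 1 - u \<in> Irr n" using outer by blast
          then show ?thesis using True by simp
        next
          case False then show ?thesis by (intro exI[of _ 0]) (simp add: proper_zero Irr.zero)
        qed
        then obtain u3 where u3: "proper n u3" "?x3 - u3 \<in> Irr n" by blast
        let ?u = "sc ?s u1 + u2 - sc ?s u3"
        have pu: "proper n ?u" by (intro proper_diff proper_add proper_sc u1 u2 u3)
        have eq: "Poly_Mapping.single w 1 - ?u = wrap A B (rel p q c d) + sc ?s (Poly_Mapping.single ?w1 1 - u1) + (?x2 - u2) - sc ?s (?x3 - u3)"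
          unfolding Jeq by (simp add: sc_diff algebra_simps)
        have "Poly_Mapping.single w 1 - ?u \<in> Irr n"
          unfolding eq by (intro Irr_diff Irr.add Irr_sc Irr.rels J u1 u2 u3)
        then show ?thesis using pu by blast
      qed
    qed
  qed
qed

lemma exists_proj: "valid_word n w \<Longrightarrow> bal w \<Longrightarrow> \<exists>u. proper n u \<and> Poly_Mapping.single w 1 - u \<in> Irr n"
  using ex_aux by blast

theorem mainTheorem7:
  fixes n h :: nat and i j \<alpha> :: "nat \<Rightarrow> nat"
  assumes "h \<ge> 1"
    and "\<forall>t\<in>{1..h}. i t \<in> {1..n} \<and> j t \<in> {1..n}"
    and "inj_on \<alpha> {1..h}"
  shows "koszul n (capelli n h i j \<alpha>)
           = const ((-1) ^ (h choose 2)) * (\<Prod>t\<in>{1..h}. var (i t) (j t))"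
proof -
  let ?ann = "map (\<lambda>t. (Prop (i t), Alpha (\<alpha> t))) [1..<h+1]"
  let ?cre = "map (\<lambda>t. (Alpha (\<alpha> t), Prop (j t))) [1..<h+1]"
  let ?cw = "capelli_word h i j \<alpha>"
  have cw: "?cw = ?ann @ ?cre" by (simp add: capelli_word_def)
  have rng: "\<forall>t\<in>set [1..<h+1]. i t \<in> {1..n} \<and> j t \<in> {1..n}" using assms(2) by (simp del: upt_Suc)
  have vw: "valid_word n ?cw" using rng unfolding cw by (auto simp del: upt_Suc simp: valid_word_def)
  have bw: "bal ?cw"
    unfolding bal_def
  proof (intro allI impI)
    fix g :: sym assume g: "virtual g"
    have "ca g ?cw = length (filter (\<lambda>t. Alpha (\<alpha> t) = g) [1..<h+1])"
      using g unfolding cw by (cases g) (simp_all del: upt_Suc add: ca_def filter_map o_def)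
    moreover have "cb g ?cw = length (filter (\<lambda>t. Alpha (\<alpha> t) = g) [1..<h+1])"
      using g unfolding cw by (cases g) (simp_all del: upt_Suc add: cb_def filter_map o_def)
    ultimately show "ca g ?cw = cb g ?cw" by simp
  qed
  obtain u0 where "proper n u0 \<and> Poly_Mapping.single ?cw 1 - u0 \<in> Irr n"
    using exists_proj[OF vw bw] by blast
  then have pu: "proper n (capelli n h i j \<alpha>) \<and> Poly_Mapping.single ?cw 1 - capelli n h i j \<alpha> \<in> Irr n"
    unfolding capelli_def proj_def by (rule someI)
  have "Act n (Poly_Mapping.single ?cw 1 - capelli n h i j \<alpha>) vac = 0"
    using pu Irr_Act by blast
  then have A: "Act n (capelli n h i j \<alpha>) vac = Ew n ?cw vac"
    by (simp add: Act_diff)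
  have "Ew n ?cw vac = Ew n ?ann (Cw \<alpha> j [1..<h+1] vac)"
    unfolding cw Ew_append using Ew_cre[OF NP_vac, of "[1..<h+1]" j n \<alpha>] rng by (simp del: upt_Suc)
  also have "\<dots> = sc ((-1) ^ (h choose 2)) (Pm i j h)"
    by (rule capelli_calc[OF assms(2,3)])
  finally have E: "Ew n ?cw vac = sc ((-1) ^ (h choose 2)) (Pm i j h)" .
  have "koszul n (capelli n h i j \<alpha>) = ev (Act n (capelli n h i j \<alpha>) vac)"
    using pu koszul_ev by blast
  also have "\<dots> = sc ((-1) ^ (h choose 2)) (ev (Pm i j h))"
    unfolding A E by (simp add: islinD[OF islin_ev])
  also have "\<dots> = const ((-1) ^ (h choose 2)) * (\<Prod>t\<in>{1..h}. var (i t) (j t))"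
    using Pm_ev[of i j h] by (simp add: const_mult)
  finally show ?thesis .
qed

end
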